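(* Let $G$ be a finite group and let $S$ be a symmetric sequence of $G$-sets whose levels $S_n$ are $\Sigma_n$-free and such that $S_0^G\neq\varnothing$ and $S_2^G\neq\varnothing$. Then the free operad $\mathbb{F}(S)$ is $\Sigma$-free with $\mathbb{F}(S)(n)^G\neq\varnothing$ for every $n\geq0$, and the class of admissible sets of $\mathbb{F}(S)$ equals the indexing system generated by the class of admissible sets of $S$.
   Context: A symmetric sequence of $G$-sets is a sequence $(S_n)_{n\geq0}$ with $S_n$ a $G\times\Sigma_n$-set; $\mathbb{F}$ is the free operad functor to operads in $G$-sets. For a finite $H$-set $T$ ($H\subseteq G$) with chosen ordering $\{1,\dots,n\}\cong T$, let $\sigma:H\to\Sigma_n$ be the permutation representation and $\Gamma_T=\{(h,\sigma(h))\}\subseteq G\times\Sigma_n$. $T$ is an admissible set of a symmetric sequence (or operad) $X$ if $X(n)^{\Gamma_T}\neq\varnothing$ (independent of the ordering). An indexing system (Blumberg–Hill) is a family of finite $H$-sets, for all $H\subseteq G$, containing the trivial actions and closed under isomorphism, restriction, conjugation, subobjects, finite coproducts and products, and self-induction; the indexing system generated by a class is the smallest one containing it. *)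

theory Defs
  imports "HOL-Algebra.Group" "HOL-Combinatorics.Permutations"
begin

text \<open>A symmetric sequence of G-sets: level n is the set S n, carrying a (left) action
  act n g sigma x of the product group G x Sigma_n, where Sigma_n is the group of
  permutations of the set {..<n} (under composition).\<close>

definition symseq :: "('g, 'b) monoid_scheme \<Rightarrow> (nat \<Rightarrow> 'x set)
      \<Rightarrow> (nat \<Rightarrow> 'g \<Rightarrow> (nat \<Rightarrow> nat) \<Rightarrow> 'x \<Rightarrow> 'x) \<Rightarrow> bool" where
  "symseq G S act \<longleftrightarrow> (\<forall>n.
     (\<forall>x\<in>S n. \<forall>g\<in>carrier G. \<forall>\<sigma>. \<sigma> permutes {..<n} \<longrightarrow> act n g \<sigma> x \<in> S n) \<and>
     (\<forall>x\<in>S n. act n \<one>\<^bsub>G\<^esub> id x = x) \<and>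
     (\<forall>x\<in>S n. \<forall>g\<in>carrier G. \<forall>g'\<in>carrier G. \<forall>\<sigma> \<sigma>'.
        \<sigma> permutes {..<n} \<longrightarrow> \<sigma>' permutes {..<n} \<longrightarrow>
        act n (g \<otimes>\<^bsub>G\<^esub> g') (\<sigma> \<circ> \<sigma>') x = act n g \<sigma> (act n g' \<sigma>' x)))"

definition levels_sigma_free :: "('g, 'b) monoid_scheme \<Rightarrow> (nat \<Rightarrow> 'x set)
      \<Rightarrow> (nat \<Rightarrow> 'g \<Rightarrow> (nat \<Rightarrow> nat) \<Rightarrow> 'x \<Rightarrow> 'x) \<Rightarrow> bool" where
  "levels_sigma_free G S act \<longleftrightarrow> (\<forall>n. \<forall>x\<in>S n. \<forall>\<sigma>.
     \<sigma> permutes {..<n} \<longrightarrow> act n \<one>\<^bsub>G\<^esub> \<sigma> x = x \<longrightarrow> \<sigma> = id)"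

definition level_has_G_fixed :: "('g, 'b) monoid_scheme \<Rightarrow> (nat \<Rightarrow> 'x set)
      \<Rightarrow> (nat \<Rightarrow> 'g \<Rightarrow> (nat \<Rightarrow> nat) \<Rightarrow> 'x \<Rightarrow> 'x) \<Rightarrow> nat \<Rightarrow> bool" where
  "level_has_G_fixed G S act n \<longleftrightarrow> (\<exists>x\<in>S n. \<forall>g\<in>carrier G. act n g id x = x)"

text \<open>A finite H-set (H a subgroup of G) with a chosen ordering of its n elements is
  encoded by the triple (H, n, rho), where rho h is the permutation of {..<n} by which
  h acts (the permutation representation). rho is normalised to be the identity
  outside H, so that triples are canonical.\<close>

type_synonym 'g hset = "'g set \<times> nat \<times> ('g \<Rightarrow> nat \<Rightarrow> nat)"

definition fhset :: "('g, 'b) monoid_scheme \<Rightarrow> 'g set \<Rightarrow> nat \<Rightarrow> ('g \<Rightarrow> nat \<Rightarrow> nat) \<Rightarrow> bool" where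
  "fhset G H n \<rho> \<longleftrightarrow> subgroup H G \<and> (\<forall>h\<in>H. \<rho> h permutes {..<n}) \<and>
     (\<forall>h\<in>H. \<forall>h'\<in>H. \<rho> (h \<otimes>\<^bsub>G\<^esub> h') = \<rho> h \<circ> \<rho> h') \<and> (\<forall>h. h \<notin> H \<longrightarrow> \<rho> h = id)"

text \<open>(H, N, rho') is (isomorphic to) the induced H-set H x_K T, for T = (K, n, rho):
  there is a map j : T \<rightarrow> X such that (h,t) \<mapsto> h.j(t) is surjective onto X and
  identifies exactly the pairs identified in H x_K T, i.e. (hk, t) ~ (h, k t).\<close>
definition induced_hset :: "('g, 'b) monoid_scheme \<Rightarrow> 'g set \<Rightarrow> 'g set \<Rightarrow> nat \<Rightarrow> ('g \<Rightarrow> nat \<Rightarrow> nat)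
      \<Rightarrow> nat \<Rightarrow> ('g \<Rightarrow> nat \<Rightarrow> nat) \<Rightarrow> bool" where
  "induced_hset G H K n \<rho> N \<rho>' \<longleftrightarrow> (\<exists>j.
     (\<forall>t<n. j t < N) \<and>
     (\<forall>x<N. \<exists>h\<in>H. \<exists>t<n. x = \<rho>' h (j t)) \<and>
     (\<forall>h\<in>H. \<forall>h'\<in>H. \<forall>t<n. \<forall>t'<n.
        \<rho>' h (j t) = \<rho>' h' (j t') \<longleftrightarrow> (\<exists>k\<in>K. h' = h \<otimes>\<^bsub>G\<^esub> k \<and> t = \<rho> k t')))"

definition indexing_system :: "('g, 'b) monoid_scheme \<Rightarrow> 'g hset set \<Rightarrow> bool" where
  "indexing_system G I \<longleftrightarrow>
     (\<forall>(H, n, \<rho>)\<in>I. fhset G H n \<rho>) \<and>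
     \<comment> \<open>contains the trivial actions\<close>
     (\<forall>H n. subgroup H G \<longrightarrow> (H, n, \<lambda>h. id) \<in> I) \<and>
     \<comment> \<open>closed under isomorphism\<close>
     (\<forall>H n \<rho> \<rho>' f. (H, n, \<rho>) \<in> I \<longrightarrow> fhset G H n \<rho>' \<longrightarrow> bij_betw f {..<n} {..<n} \<longrightarrow>
        (\<forall>h\<in>H. \<forall>i<n. f (\<rho>' h i) = \<rho> h (f i)) \<longrightarrow> (H, n, \<rho>') \<in> I) \<and>
     \<comment> \<open>closed under subobjects (H-sets admitting an equivariant injection)\<close>
     (\<forall>H n m \<rho> \<rho>' f. (H, n, \<rho>) \<in> I \<longrightarrow> fhset G H m \<rho>' \<longrightarrow> inj_on f {..<m} \<longrightarrow>
        f ` {..<m} \<subseteq> {..<n} \<longrightarrow>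
        (\<forall>h\<in>H. \<forall>i<m. f (\<rho>' h i) = \<rho> h (f i)) \<longrightarrow> (H, m, \<rho>') \<in> I) \<and>
     \<comment> \<open>closed under restriction\<close>
     (\<forall>H n \<rho> K. (H, n, \<rho>) \<in> I \<longrightarrow> subgroup K G \<longrightarrow> K \<subseteq> H \<longrightarrow>
        (K, n, \<lambda>h. if h \<in> K then \<rho> h else id) \<in> I) \<and>
     \<comment> \<open>closed under conjugation\<close>
     (\<forall>H n \<rho> g. (H, n, \<rho>) \<in> I \<longrightarrow> g \<in> carrier G \<longrightarrow>
        ((\<lambda>h. g \<otimes>\<^bsub>G\<^esub> h \<otimes>\<^bsub>G\<^esub> inv\<^bsub>G\<^esub> g) ` H, n,
         \<lambda>h. if h \<in> (\<lambda>h. g \<otimes>\<^bsub>G\<^esub> h \<otimes>\<^bsub>G\<^esub> inv\<^bsub>G\<^esub> g) ` H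
             then \<rho> (inv\<^bsub>G\<^esub> g \<otimes>\<^bsub>G\<^esub> h \<otimes>\<^bsub>G\<^esub> g) else id) \<in> I) \<and>
     \<comment> \<open>closed under finite coproducts (disjoint union, encoded on {..<n+m})\<close>
     (\<forall>H n \<rho> m \<rho>'. (H, n, \<rho>) \<in> I \<longrightarrow> (H, m, \<rho>') \<in> I \<longrightarrow>
        (H, n + m, \<lambda>h. if h \<in> H then (\<lambda>i. if i < n then \<rho> h i
                                     else if i < n + m then n + \<rho>' h (i - n) else i)
                      else id) \<in> I) \<and>
     \<comment> \<open>closed under finite products (pair (i,j) encoded as i*m+j)\<close>
     (\<forall>H n \<rho> m \<rho>'. (H, n, \<rho>) \<in> I \<longrightarrow> (H, m, \<rho>') \<in> I \<longrightarrow>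
        (H, n * m, \<lambda>h. if h \<in> H then (\<lambda>i. if i < n * m
                                          then \<rho> h (i div m) * m + \<rho>' h (i mod m) else i)
                      else id) \<in> I) \<and>
     \<comment> \<open>closed under self-induction: H/K in I(H) and T in I(K) imply H x_K T in I(H)\<close>
     (\<forall>H K n \<rho> N \<rho>'. subgroup H G \<longrightarrow> subgroup K G \<longrightarrow> K \<subseteq> H \<longrightarrow> (K, n, \<rho>) \<in> I \<longrightarrow>
        (\<exists>m \<tau>. (H, m, \<tau>) \<in> I \<and> induced_hset G H K 1 (\<lambda>h. id) m \<tau>) \<longrightarrow>
        fhset G H N \<rho>' \<longrightarrow> induced_hset G H K n \<rho> N \<rho>' \<longrightarrow> (H, N, \<rho>') \<in> I)"

definition gen_indexing_system :: "('g, 'b) monoid_scheme \<Rightarrow> 'g hset set \<Rightarrow> 'g hset set" where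
  "gen_indexing_system G C = \<Inter>{I. indexing_system G I \<and> C \<subseteq> I}"

text \<open>Admissible sets of a symmetric sequence: X(n)^Gamma_T nonempty, where
  Gamma_T = {(h, rho h) | h in H}.\<close>
definition adm_seq :: "('g, 'b) monoid_scheme \<Rightarrow> (nat \<Rightarrow> 'x set)
      \<Rightarrow> (nat \<Rightarrow> 'g \<Rightarrow> (nat \<Rightarrow> nat) \<Rightarrow> 'x \<Rightarrow> 'x) \<Rightarrow> 'g hset set" where
  "adm_seq G S act = {(H, n, \<rho>). fhset G H n \<rho> \<and> (\<exists>x\<in>S n. \<forall>h\<in>H. act n h (\<rho> h) x = x)}"

text \<open>Elements of F(S)(n) are represented by planar trees whose leaves are labelled
  bijectively by {..<n} and whose vertices with k inputs are decorated by elements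
  of S k, modulo the equivalence relation generated by
  Node (sigma . x) [t_0,...,t_{k-1}] ~ Node x [t_{sigma 0},...,t_{sigma (k-1)}]
  (and congruence).  The leaf Leaf 0 is the operadic unit.\<close>

datatype 'x ftree = Leaf nat | Node 'x "'x ftree list"

fun leaves :: "'x ftree \<Rightarrow> nat list" where
  "leaves (Leaf i) = [i]"
| "leaves (Node x ts) = concat (map leaves ts)"

fun labels_ok :: "(nat \<Rightarrow> 'x set) \<Rightarrow> 'x ftree \<Rightarrow> bool" where
  "labels_ok S (Leaf i) = True"
| "labels_ok S (Node x ts) = (x \<in> S (length ts) \<and> (\<forall>t\<in>set ts. labels_ok S t))"

definition fo_wf :: "(nat \<Rightarrow> 'x set) \<Rightarrow> nat \<Rightarrow> 'x ftree \<Rightarrow> bool" where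
  "fo_wf S n t \<longleftrightarrow> labels_ok S t \<and> distinct (leaves t) \<and> set (leaves t) = {..<n}"

fun tree_gact :: "(nat \<Rightarrow> 'g \<Rightarrow> (nat \<Rightarrow> nat) \<Rightarrow> 'x \<Rightarrow> 'x) \<Rightarrow> 'g \<Rightarrow> 'x ftree \<Rightarrow> 'x ftree" where
  "tree_gact act g (Leaf i) = Leaf i"
| "tree_gact act g (Node x ts) = Node (act (length ts) g id x) (map (tree_gact act g) ts)"

fun tree_relabel :: "(nat \<Rightarrow> nat) \<Rightarrow> 'x ftree \<Rightarrow> 'x ftree" where
  "tree_relabel \<sigma> (Leaf i) = Leaf (\<sigma> i)"
| "tree_relabel \<sigma> (Node x ts) = Node x (map (tree_relabel \<sigma>) ts)"

definition tree_act :: "(nat \<Rightarrow> 'g \<Rightarrow> (nat \<Rightarrow> nat) \<Rightarrow> 'x \<Rightarrow> 'x) \<Rightarrow> 'g \<Rightarrow> (nat \<Rightarrow> nat)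
      \<Rightarrow> 'x ftree \<Rightarrow> 'x ftree" where
  "tree_act act g \<sigma> t = tree_relabel \<sigma> (tree_gact act g t)"

inductive tree_eq :: "('g, 'b) monoid_scheme \<Rightarrow> (nat \<Rightarrow> 'x set)
      \<Rightarrow> (nat \<Rightarrow> 'g \<Rightarrow> (nat \<Rightarrow> nat) \<Rightarrow> 'x \<Rightarrow> 'x) \<Rightarrow> 'x ftree \<Rightarrow> 'x ftree \<Rightarrow> bool"
  for G S act where
  te_refl: "tree_eq G S act t t"
| te_sym: "tree_eq G S act t u \<Longrightarrow> tree_eq G S act u t"
| te_trans: "tree_eq G S act t u \<Longrightarrow> tree_eq G S act u v \<Longrightarrow> tree_eq G S act t v"
| te_cong: "list_all2 (tree_eq G S act) ts us \<Longrightarrow> tree_eq G S act (Node x ts) (Node x us)"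
| te_swap: "\<sigma> permutes {..<length ts} \<Longrightarrow> x \<in> S (length ts) \<Longrightarrow>
    tree_eq G S act (Node (act (length ts) \<one>\<^bsub>G\<^esub> \<sigma> x) ts)
                    (Node x (map (\<lambda>i. ts ! \<sigma> i) [0..<length ts]))"
  monos list.rel_mono

definition fo_sigma_free :: "('g, 'b) monoid_scheme \<Rightarrow> (nat \<Rightarrow> 'x set)
      \<Rightarrow> (nat \<Rightarrow> 'g \<Rightarrow> (nat \<Rightarrow> nat) \<Rightarrow> 'x \<Rightarrow> 'x) \<Rightarrow> bool" where
  "fo_sigma_free G S act \<longleftrightarrow> (\<forall>n t \<sigma>. fo_wf S n t \<longrightarrow> \<sigma> permutes {..<n} \<longrightarrow>
      tree_eq G S act (tree_relabel \<sigma> t) t \<longrightarrow> \<sigma> = id)"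

definition fo_has_G_fixed :: "('g, 'b) monoid_scheme \<Rightarrow> (nat \<Rightarrow> 'x set)
      \<Rightarrow> (nat \<Rightarrow> 'g \<Rightarrow> (nat \<Rightarrow> nat) \<Rightarrow> 'x \<Rightarrow> 'x) \<Rightarrow> nat \<Rightarrow> bool" where
  "fo_has_G_fixed G S act n \<longleftrightarrow>
     (\<exists>t. fo_wf S n t \<and> (\<forall>g\<in>carrier G. tree_eq G S act (tree_gact act g t) t))"

definition adm_fo :: "('g, 'b) monoid_scheme \<Rightarrow> (nat \<Rightarrow> 'x set)
      \<Rightarrow> (nat \<Rightarrow> 'g \<Rightarrow> (nat \<Rightarrow> nat) \<Rightarrow> 'x \<Rightarrow> 'x) \<Rightarrow> 'g hset set" where
  "adm_fo G S act = {(H, n, \<rho>). fhset G H n \<rho> \<and>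
     (\<exists>t. fo_wf S n t \<and> (\<forall>h\<in>H. tree_eq G S act (tree_act act h (\<rho> h) t) t))}"

end

theory Submission
  imports Defs
begin

abbreviation pinv :: "(nat \<Rightarrow> nat) \<Rightarrow> nat \<Rightarrow> nat" where "pinv f \<equiv> Hilbert_Choice.inv f"

locale fo_ctx = group G for G :: "('g, 'b) monoid_scheme" (structure) +
  fixes S :: "nat \<Rightarrow> 'x set"
    and act :: "nat \<Rightarrow> 'g \<Rightarrow> (nat \<Rightarrow> nat) \<Rightarrow> 'x \<Rightarrow> 'x"
  assumes ss: "symseq G S act"
    and fr: "levels_sigma_free G S act"
begin

lemma act_closed: "x \<in> S k \<Longrightarrow> g \<in> carrier G \<Longrightarrow> \<sigma> permutes {..<k} \<Longrightarrow> act k g \<sigma> x \<in> S k"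
  using ss unfolding symseq_def by blast

lemma act_one: "x \<in> S k \<Longrightarrow> act k \<one> id x = x"
  using ss unfolding symseq_def by blast

lemma act_comp: "x \<in> S k \<Longrightarrow> g \<in> carrier G \<Longrightarrow> g' \<in> carrier G \<Longrightarrow> \<sigma> permutes {..<k} \<Longrightarrow>
   \<sigma>' permutes {..<k} \<Longrightarrow> act k (g \<otimes> g') (\<sigma> \<circ> \<sigma>') x = act k g \<sigma> (act k g' \<sigma>' x)"
  using ss unfolding symseq_def by blast

lemma act_free: "x \<in> S k \<Longrightarrow> \<sigma> permutes {..<k} \<Longrightarrow> act k \<one> \<sigma> x = x \<Longrightarrow> \<sigma> = id"
  using fr unfolding levels_sigma_free_def by blast

lemma act_split1: "x \<in> S k \<Longrightarrow> g \<in> carrier G \<Longrightarrow> \<sigma> permutes {..<k} \<Longrightarrow>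
   act k g \<sigma> x = act k \<one> \<sigma> (act k g id x)"
  using act_comp[of x k \<one> g \<sigma> id] by simp

lemma act_split2: "x \<in> S k \<Longrightarrow> g \<in> carrier G \<Longrightarrow> \<sigma> permutes {..<k} \<Longrightarrow>
   act k g \<sigma> x = act k g id (act k \<one> \<sigma> x)"
  using act_comp[of x k g \<one> id \<sigma>] by simp

definition rel :: "nat \<Rightarrow> (nat \<Rightarrow> nat) \<Rightarrow> 'x \<Rightarrow> 'x \<Rightarrow> bool" where
  "rel k \<pi> x y \<longleftrightarrow> (\<pi> = id \<and> x = y) \<or> (y \<in> S k \<and> x = act k \<one> \<pi> y)"

lemma rel_refl: "rel k id x x" by (simp add: rel_def)

lemma rel_sym: "\<pi> permutes {..<k} \<Longrightarrow> rel k \<pi> x y \<Longrightarrow> rel k (pinv \<pi>) y x"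
proof -
  assume p: "\<pi> permutes {..<k}" and r: "rel k \<pi> x y"
  show ?thesis
  proof (cases "\<pi> = id \<and> x = y")
    case True then show ?thesis by (simp add: rel_def)
  next
    case False
    with r have y: "y \<in> S k" and x: "x = act k \<one> \<pi> y" by (auto simp: rel_def)
    have "act k \<one> (pinv \<pi>) x = act k (\<one> \<otimes> \<one>) (pinv \<pi> \<circ> \<pi>) y"
      using act_comp[OF y one_closed one_closed permutes_inv[OF p] p] x by simp
    also have "\<dots> = y" using permutes_inv_o(2)[OF p] act_one[OF y] by simp
    finally show ?thesis using x act_closed[OF y _ p] by (auto simp: rel_def)
  qed
qed

lemma rel_trans: "\<pi> permutes {..<k} \<Longrightarrow> \<pi>' permutes {..<k} \<Longrightarrow> rel k \<pi> x y \<Longrightarrow> rel k \<pi>' y z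
   \<Longrightarrow> rel k (\<pi> \<circ> \<pi>') x z"
  unfolding rel_def
  apply (elim disjE conjE)
     apply simp_all
  apply (rule disjI2)
  using act_comp[of z k \<one> \<one> \<pi> \<pi>'] by simp

inductive iso :: "'x ftree \<Rightarrow> 'x ftree \<Rightarrow> bool" where
  iso_leaf: "iso (Leaf i) (Leaf i)"
| iso_node: "length ts = length us \<Longrightarrow> \<pi> permutes {..<length us} \<Longrightarrow> rel (length us) \<pi> x y \<Longrightarrow>
    (\<forall>i<length us. iso (ts ! \<pi> i) (us ! i)) \<Longrightarrow> iso (Node x ts) (Node y us)"

lemma iso_refl: "iso t t"
proof (induction t)
  case (Leaf i) then show ?case by (rule iso_leaf)
next
  case (Node x ts) then show ?case
    by (intro iso_node[of _ _ id]) (auto simp: rel_refl)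
qed

lemma iso_sym: "iso t u \<Longrightarrow> iso u t"
proof (induction rule: iso.induct)
  case (iso_leaf i) then show ?case by (rule iso_leaf)
next
  case (iso_node ts us \<pi> x y)
  show ?case
  proof (rule iso.iso_node[of _ _ "pinv \<pi>"])
    show "pinv \<pi> permutes {..<length ts}" using iso_node permutes_inv by auto
    show "rel (length ts) (pinv \<pi>) y x" using iso_node rel_sym by auto
    show "\<forall>i<length ts. iso (us ! pinv \<pi> i) (ts ! i)"
    proof (intro allI impI)
      fix i assume "i < length ts"
      then have "pinv \<pi> i < length us" using iso_node permutes_in_image[OF permutes_inv[OF iso_node(2)]] by auto
      then show "iso (us ! pinv \<pi> i) (ts ! i)" using iso_node(4) permutes_inverses(1)[OF iso_node(2)] by metis
    qed
  qed (use iso_node in auto)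
qed

lemma iso_trans: "iso t u \<Longrightarrow> iso u v \<Longrightarrow> iso t v"
proof (induction arbitrary: v rule: iso.induct)
  case (iso_leaf i) then show ?case by simp
next
  case (iso_node ts us \<pi> x y)
  from iso_node(5) obtain vs z \<pi>' where v: "v = Node z vs" and l: "length us = length vs"
    and p': "\<pi>' permutes {..<length vs}" and r': "rel (length vs) \<pi>' y z"
    and sub: "\<forall>i<length vs. iso (us ! \<pi>' i) (vs ! i)"
    by (cases rule: iso.cases) auto
  show ?case unfolding v
  proof (rule iso.iso_node[of _ _ "\<pi> \<circ> \<pi>'"])
    show "length ts = length vs" using iso_node l by simp
    show pp: "\<pi> \<circ> \<pi>' permutes {..<length vs}" using iso_node(2) p' l permutes_compose by auto
    show "rel (length vs) (\<pi> \<circ> \<pi>') x z" using rel_trans iso_node(2,3) p' r' l by auto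
    show "\<forall>i<length vs. iso (ts ! (\<pi> \<circ> \<pi>') i) (vs ! i)"
    proof (intro allI impI)
      fix i assume i: "i < length vs"
      then have "\<pi>' i < length us" using l permutes_in_image[OF p'] by auto
      then show "iso (ts ! (\<pi> \<circ> \<pi>') i) (vs ! i)" using iso_node(4) sub i by auto
    qed
  qed
qed

lemma tree_eq_iso: "tree_eq G S act t u \<Longrightarrow> iso t u"
proof (induction rule: tree_eq.induct)
  case (te_refl t) then show ?case by (rule iso_refl)
next
  case (te_sym t u) then show ?case using iso_sym by blast
next
  case (te_trans t u v) then show ?case using iso_trans by blast
next
  case (te_cong ts us x) then show ?case
    by (intro iso_node[of _ _ id]) (auto simp: rel_refl list_all2_conv_all_nth)
next
  case (te_swap \<sigma> ts x)
  show ?case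
    by (rule iso_node[of _ _ \<sigma>]) (use te_swap in \<open>auto simp: rel_def iso_refl permutes_in_image\<close>)
qed

lemma iso_tree_eq: "iso t u \<Longrightarrow> tree_eq G S act t u"
proof (induction rule: iso.induct)
  case (iso_leaf i) then show ?case by (rule te_refl)
next
  case (iso_node ts us \<pi> x y)
  show ?case
  proof (cases "\<pi> = id \<and> x = y")
    case True then show ?thesis using iso_node
      by (auto intro!: te_cong simp: list_all2_conv_all_nth)
  next
    case False
    then have y: "y \<in> S (length us)" and x: "x = act (length us) \<one> \<pi> y"
      using iso_node(3) by (auto simp: rel_def)
    have "tree_eq G S act (Node (act (length ts) \<one> \<pi> y) ts)
                    (Node y (map (\<lambda>i. ts ! \<pi> i) [0..<length ts]))"
      by (rule te_swap) (use iso_node y in auto)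
    moreover have "tree_eq G S act (Node y (map (\<lambda>i. ts ! \<pi> i) [0..<length ts])) (Node y us)"
      using iso_node by (auto intro!: te_cong simp: list_all2_conv_all_nth)
    ultimately show ?thesis using x iso_node(1) by (metis te_trans)
  qed
qed

lemma tree_eq_iff: "tree_eq G S act t u \<longleftrightarrow> iso t u"
  using tree_eq_iso iso_tree_eq by blast

end

fun subst :: "'x ftree \<Rightarrow> (nat \<Rightarrow> 'x ftree) \<Rightarrow> 'x ftree" where
  "subst (Leaf i) f = f i"
| "subst (Node x ts) f = Node x (map (\<lambda>t. subst t f) ts)"

lemma leaves_relabel: "leaves (tree_relabel \<sigma> t) = map \<sigma> (leaves t)"
  by (induction t) (auto simp: map_concat cong: map_cong)

lemma relabel_relabel: "tree_relabel \<sigma> (tree_relabel \<tau> t) = tree_relabel (\<sigma> \<circ> \<tau>) t"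
  by (induction t) auto

lemma relabel_id: "tree_relabel id t = t"
  by (induction t) (auto intro: map_idI)

lemma relabel_cong: "(\<forall>i\<in>set (leaves t). \<sigma> i = \<tau> i) \<Longrightarrow> tree_relabel \<sigma> t = tree_relabel \<tau> t"
  by (induction t) auto

lemma labels_ok_relabel[simp]: "labels_ok S (tree_relabel \<sigma> t) = labels_ok S t"
  by (induction t) auto

lemma leaves_gact[simp]: "leaves (tree_gact act g t) = leaves t"
  by (induction t) (auto cong: map_cong)

lemma gact_relabel: "tree_gact act g (tree_relabel \<sigma> t) = tree_relabel \<sigma> (tree_gact act g t)"
  by (induction t) auto

lemma concat_map_concat: "concat (map (\<lambda>x. concat (h x)) xs) = concat (concat (map h xs))"
  by (induction xs) auto

lemma leaves_subst: "leaves (subst t f) = concat (map (\<lambda>i. leaves (f i)) (leaves t))"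
  by (induction t) (auto simp: map_concat comp_def concat_map_concat cong: map_cong)

lemma labels_ok_subst: "labels_ok S t \<Longrightarrow> (\<forall>i\<in>set (leaves t). labels_ok S (f i)) \<Longrightarrow> labels_ok S (subst t f)"
  by (induction t) auto

lemma relabel_subst: "tree_relabel \<sigma> (subst t f) = subst t (tree_relabel \<sigma> \<circ> f)"
  by (induction t) auto

lemma subst_relabel: "subst (tree_relabel \<tau> t) f = subst t (f \<circ> \<tau>)"
  by (induction t) auto

lemma gact_subst: "tree_gact act g (subst t f) = subst (tree_gact act g t) (tree_gact act g \<circ> f)"
  by (induction t) auto

lemma subst_cong: "(\<forall>i\<in>set (leaves t). f i = f' i) \<Longrightarrow> subst t f = subst t f'"
  by (induction t) auto

lemma subst_leaf: "subst t Leaf = t"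
  by (induction t) (auto intro: map_idI)

context fo_ctx
begin

lemma labels_ok_gact: "g \<in> carrier G \<Longrightarrow> labels_ok S t \<Longrightarrow> labels_ok S (tree_gact act g t)"
  by (induction t) (auto intro: act_closed)

lemma gact_one: "labels_ok S t \<Longrightarrow> tree_gact act \<one> t = t"
  by (induction t) (auto simp: act_one intro: map_idI)

lemma gact_gact: "g \<in> carrier G \<Longrightarrow> g' \<in> carrier G \<Longrightarrow> labels_ok S t \<Longrightarrow>
   tree_gact act g (tree_gact act g' t) = tree_gact act (g \<otimes> g') t"
  by (induction t) (auto simp: act_comp[of _ _ g g' id id, simplified])

lemma iso_leaves: "iso t u \<Longrightarrow> set (leaves t) = set (leaves u)"
proof (induction rule: iso.induct)
  case (iso_leaf i) then show ?case by simp
next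
  case (iso_node ts us \<pi> x y)
  have "set (leaves (Node x ts)) = (\<Union>i<length us. set (leaves (ts ! \<pi> i)))"
  proof -
    have "(\<lambda>i. ts ! \<pi> i) ` {..<length us} = (\<lambda>i. ts ! i) ` (\<pi> ` {..<length us})" by auto
    then have "set ts = (\<lambda>i. ts ! \<pi> i) ` {..<length us}"
      using iso_node(1) permutes_image[OF iso_node(2)] by (auto simp: set_conv_nth)
    then show ?thesis by auto
  qed
  also have "\<dots> = (\<Union>i<length us. set (leaves (us ! i)))" using iso_node(4) by auto
  also have "\<dots> = set (leaves (Node y us))"
  proof -
    have "set us = (\<lambda>i. us ! i) ` {..<length us}" by (auto simp: in_set_conv_nth)
    then show ?thesis by simp
  qed
  finally show ?case .
qed

lemma iso_relabel: "iso t u \<Longrightarrow> iso (tree_relabel \<sigma> t) (tree_relabel \<sigma> u)"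
proof (induction rule: iso.induct)
  case (iso_leaf i) then show ?case by (simp add: iso.iso_leaf)
next
  case (iso_node ts us \<pi> x y)
  show ?case
    by (simp, rule iso.iso_node[of _ _ \<pi>]) (use iso_node permutes_in_image[OF iso_node(2)] in auto)
qed

lemma rel_gact: "g \<in> carrier G \<Longrightarrow> \<pi> permutes {..<k} \<Longrightarrow> rel k \<pi> x y \<Longrightarrow> rel k \<pi> (act k g id x) (act k g id y)"
  unfolding rel_def
  apply (elim disjE conjE)
   apply simp
  apply (rule disjI2)
  using act_comp[of y k g \<one> id \<pi>] act_comp[of y k \<one> g \<pi> id] act_closed[of y k g id] by simp

lemma iso_gact: "iso t u \<Longrightarrow> g \<in> carrier G \<Longrightarrow> iso (tree_gact act g t) (tree_gact act g u)"
proof (induction rule: iso.induct)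
  case (iso_leaf i) then show ?case by (simp add: iso.iso_leaf)
next
  case (iso_node ts us \<pi> x y)
  show ?case
    by (simp, rule iso.iso_node[of _ _ \<pi>]) (use iso_node rel_gact permutes_in_image[OF iso_node(2)] in auto)
qed

lemma iso_labels: "iso t u \<Longrightarrow> labels_ok S u \<Longrightarrow> labels_ok S t"
proof (induction rule: iso.induct)
  case (iso_leaf i) then show ?case by simp
next
  case (iso_node ts us \<pi> x y)
  have "x \<in> S (length ts)"
    using iso_node(1,2,3,5) act_closed by (auto simp: rel_def)
  moreover have "\<forall>t\<in>set ts. labels_ok S t"
  proof
    fix t assume "t \<in> set ts"
    then obtain j where j: "j < length ts" "t = ts ! j" by (auto simp: set_conv_nth)
    let ?i = "pinv \<pi> j"
    have i: "?i < length us" using j iso_node(1) permutes_in_image[OF permutes_inv[OF iso_node(2)]] by auto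
    have "\<pi> ?i = j" using permutes_inverses(1)[OF iso_node(2)] by simp
    then show "labels_ok S t" using iso_node(4,5) i j by auto
  qed
  ultimately show ?case by simp
qed

lemma iso_subst1: "iso t u \<Longrightarrow> iso (subst t f) (subst u f)"
proof (induction rule: iso.induct)
  case (iso_leaf i) then show ?case by (simp add: iso_refl)
next
  case (iso_node ts us \<pi> x y)
  show ?case
    by (simp, rule iso.iso_node[of _ _ \<pi>]) (use iso_node permutes_in_image[OF iso_node(2)] in auto)
qed

lemma iso_subst2: "(\<forall>i\<in>set (leaves t). iso (f i) (f' i)) \<Longrightarrow> iso (subst t f) (subst t f')"
proof (induction t)
  case (Leaf i) then show ?case by simp
next
  case (Node x ts)
  show ?case
    by (simp, rule iso.iso_node[of _ _ id]) (use Node in \<open>auto simp: rel_refl\<close>)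
qed

end

fun comb :: "'x \<Rightarrow> nat \<Rightarrow> nat \<Rightarrow> 'x ftree" where
  "comb y 0 k = Leaf k"
| "comb y (Suc m) k = Node y [Leaf k, comb y m (Suc k)]"

lemma leaves_comb: "leaves (comb y m k) = [k..<k + m + 1]"
  by (induction m arbitrary: k) (auto simp: upt_rec)

lemma labels_ok_comb: "y \<in> S 2 \<Longrightarrow> labels_ok S (comb y m k)"
  by (induction m arbitrary: k) (auto simp: numeral_2_eq_2)

lemma gact_comb: "act 2 g id y = y \<Longrightarrow> tree_gact act g (comb y m k) = comb y m k"
  by (induction m arbitrary: k) (auto simp: numeral_2_eq_2)

context fo_ctx
begin

lemma relabel_fix: "labels_ok S t \<Longrightarrow> iso (tree_relabel \<sigma> t) t \<Longrightarrow> \<forall>i\<in>set (leaves t). \<sigma> i = i"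
proof (induction t)
  case (Leaf j) then show ?case by (auto elim: iso.cases)
next
  case (Node x ts)
  from Node(3) obtain \<pi> where p: "\<pi> permutes {..<length ts}" and r: "rel (length ts) \<pi> x x"
    and sub: "\<forall>i<length ts. iso (map (tree_relabel \<sigma>) ts ! \<pi> i) (ts ! i)"
    by (cases rule: iso.cases) auto
  have "\<pi> = id" using r act_free p by (auto simp: rel_def)
  with sub have sub': "\<forall>i<length ts. iso (tree_relabel \<sigma> (ts ! i)) (ts ! i)" by simp
  show ?case
  proof
    fix i assume "i \<in> set (leaves (Node x ts))"
    then obtain t where t: "t \<in> set ts" "i \<in> set (leaves t)" by auto
    then obtain j where j: "j < length ts" "t = ts ! j" by (auto simp: in_set_conv_nth)
    show "\<sigma> i = i" using Node(1)[OF t(1)] Node(2) t sub' j by auto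
  qed
qed

lemma sigma_free: "fo_sigma_free G S act"
  unfolding fo_sigma_free_def
proof (intro allI impI)
  fix n t \<sigma> assume wf: "fo_wf S n t" and p: "\<sigma> permutes {..<n}" and e: "tree_eq G S act (tree_relabel \<sigma> t) t"
  have "\<forall>i\<in>set (leaves t). \<sigma> i = i" using relabel_fix wf e tree_eq_iff by (auto simp: fo_wf_def)
  then have "\<forall>i<n. \<sigma> i = i" using wf by (auto simp: fo_wf_def)
  then show "\<sigma> = id" using p unfolding fun_eq_iff by (metis id_apply permutes_not_in lessThan_iff)
qed

end

locale fo_ctx2 = fo_ctx +
  assumes fix0: "level_has_G_fixed G S act 0"
    and fix2: "level_has_G_fixed G S act 2"
begin

lemma fixed_tree: "\<exists>t. fo_wf S n t \<and> (\<forall>g\<in>carrier G. tree_gact act g t = t)"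
proof (cases n)
  case 0
  from fix0 obtain z where z: "z \<in> S 0" "\<forall>g\<in>carrier G. act 0 g id z = z"
    by (auto simp: level_has_G_fixed_def)
  show ?thesis using 0 z by (intro exI[of _ "Node z []"]) (auto simp: fo_wf_def)
next
  case (Suc m)
  from fix2 obtain y where y: "y \<in> S 2" "\<forall>g\<in>carrier G. act 2 g id y = y"
    by (auto simp: level_has_G_fixed_def)
  show ?thesis using Suc y
    by (intro exI[of _ "comb y m 0"]) (auto simp: fo_wf_def leaves_comb labels_ok_comb gact_comb)
qed

lemma has_fixed: "fo_has_G_fixed G S act n"
  using fixed_tree unfolding fo_has_G_fixed_def by (metis te_refl)

end

definition enc :: "(nat \<Rightarrow> nat) \<Rightarrow> nat \<Rightarrow> 'g set \<Rightarrow> ('g \<Rightarrow> nat \<Rightarrow> nat) \<Rightarrow> 'g \<Rightarrow> nat \<Rightarrow> nat" where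
  "enc e c H \<rho> = (\<lambda>h. if h \<in> H then (\<lambda>i. if i < c then the_inv_into {..<c} e (\<rho> h (e i)) else i) else id)"

context fo_ctx
begin

definition acts :: "'g set \<Rightarrow> nat set \<Rightarrow> ('g \<Rightarrow> nat \<Rightarrow> nat) \<Rightarrow> bool" where
  "acts H L \<rho> \<longleftrightarrow> (\<forall>h\<in>H. \<forall>x\<in>L. \<rho> h x \<in> L) \<and> (\<forall>h\<in>H. \<forall>h'\<in>H. \<forall>x\<in>L. \<rho> (h \<otimes> h') x = \<rho> h (\<rho> h' x))
     \<and> (\<forall>x\<in>L. \<rho> \<one> x = x)"

lemma fhset_one: assumes "fhset G H n \<rho>" shows "\<rho> \<one> = id"
proof -
  have H: "subgroup H G" "\<forall>h\<in>H. \<rho> h permutes {..<n}" "\<forall>h\<in>H. \<forall>h'\<in>H. \<rho> (h \<otimes> h') = \<rho> h \<circ> \<rho> h'"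
    using assms by (auto simp: fhset_def)
  have o: "\<one> \<in> H" by (rule subgroup.one_closed[OF H(1)])
  have eq: "\<rho> \<one> \<circ> \<rho> \<one> = \<rho> \<one>" using H(3) o by (metis l_one one_closed)
  have iv: "pinv (\<rho> \<one>) \<circ> \<rho> \<one> = id" using permutes_inv_o(2)[OF H(2)[rule_format, OF o]] .
  have "\<rho> \<one> = (pinv (\<rho> \<one>) \<circ> \<rho> \<one>) \<circ> \<rho> \<one>" unfolding iv by simp
  also have "\<dots> = pinv (\<rho> \<one>) \<circ> (\<rho> \<one> \<circ> \<rho> \<one>)" by (simp only: comp_assoc)
  also have "\<dots> = id" unfolding eq iv ..
  finally show ?thesis .
qed

lemma fhset_acts: assumes "fhset G H n \<rho>" shows "acts H {..<n} \<rho>"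
proof -
  have H: "\<forall>h\<in>H. \<rho> h permutes {..<n}" "\<forall>h\<in>H. \<forall>h'\<in>H. \<rho> (h \<otimes> h') = \<rho> h \<circ> \<rho> h'"
    using assms by (auto simp: fhset_def)
  have "\<forall>h\<in>H. \<forall>x\<in>{..<n}. \<rho> h x \<in> {..<n}"
  proof (intro ballI)
    fix h x assume "h \<in> H" "x \<in> {..<n}"
    then show "\<rho> h x \<in> {..<n}" using H(1) permutes_in_image[of "\<rho> h" "{..<n}" x] by auto
  qed
  moreover have "\<forall>h\<in>H. \<forall>h'\<in>H. \<forall>x\<in>{..<n}. \<rho> (h \<otimes> h') x = \<rho> h (\<rho> h' x)"
    using H(2) by simp
  ultimately show ?thesis using fhset_one[OF assms] unfolding acts_def by simp
qed

lemma acts_closed: "acts H L \<rho> \<Longrightarrow> h \<in> H \<Longrightarrow> x \<in> L \<Longrightarrow> \<rho> h x \<in> L"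
  unfolding acts_def by blast

lemma acts_hom: "acts H L \<rho> \<Longrightarrow> h \<in> H \<Longrightarrow> h' \<in> H \<Longrightarrow> x \<in> L \<Longrightarrow> \<rho> (h \<otimes> h') x = \<rho> h (\<rho> h' x)"
  unfolding acts_def by blast

lemma acts_one: "acts H L \<rho> \<Longrightarrow> x \<in> L \<Longrightarrow> \<rho> \<one> x = x"
  unfolding acts_def by blast

lemma acts_inv: assumes "acts H L \<rho>" "subgroup H G" "h \<in> H" "x \<in> L"
  shows "\<rho> (inv h) (\<rho> h x) = x" "\<rho> h (\<rho> (inv h) x) = x"
proof -
  have hi: "inv h \<in> H" by (rule subgroup.m_inv_closed[OF assms(2,3)])
  have hc: "h \<in> carrier G" by (rule subgroup.mem_carrier[OF assms(2,3)])
  have c1: "\<rho> (inv h \<otimes> h) x = \<rho> (inv h) (\<rho> h x)" "\<rho> (h \<otimes> inv h) x = \<rho> h (\<rho> (inv h) x)"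
    by (rule acts_hom[OF assms(1) hi assms(3) assms(4)], rule acts_hom[OF assms(1) assms(3) hi assms(4)])
  have c2: "inv h \<otimes> h = \<one>" "h \<otimes> inv h = \<one>" using hc by simp_all
  have c3: "\<rho> \<one> x = x" using acts_one[OF assms(1,4)] .
  have "\<rho> (inv h) (\<rho> h x) = \<rho> (inv h \<otimes> h) x" by (rule c1(1)[symmetric])
  also have "\<dots> = \<rho> \<one> x" by (simp only: c2)
  finally show "\<rho> (inv h) (\<rho> h x) = x" using c3 by simp
  have "\<rho> h (\<rho> (inv h) x) = \<rho> (h \<otimes> inv h) x" by (rule c1(2)[symmetric])
  also have "\<dots> = \<rho> \<one> x" by (simp only: c2)
  finally show "\<rho> h (\<rho> (inv h) x) = x" using c3 by simp
qed

lemma acts_inj: assumes "acts H L \<rho>" "subgroup H G" "h \<in> H" shows "inj_on (\<rho> h) L"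
proof (rule inj_onI)
  fix x y assume "x \<in> L" "y \<in> L" "\<rho> h x = \<rho> h y"
  then show "x = y" using acts_inv(1)[OF assms, of x] acts_inv(1)[OF assms, of y] by metis
qed

lemma acts_image: assumes "acts H L \<rho>" "subgroup H G" "h \<in> H" shows "\<rho> h ` L = L"
proof
  show "\<rho> h ` L \<subseteq> L" using acts_closed[OF assms(1) assms(3)] by blast
  show "L \<subseteq> \<rho> h ` L"
  proof
    fix x assume x: "x \<in> L"
    have hi: "inv h \<in> H" by (rule subgroup.m_inv_closed[OF assms(2,3)])
    have "\<rho> (inv h) x \<in> L" using acts_closed[OF assms(1) hi x] .
    moreover have "x = \<rho> h (\<rho> (inv h) x)" using acts_inv(2)[OF assms x] by simp
    ultimately show "x \<in> \<rho> h ` L" by blast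
  qed
qed

lemma fhset_enc:
  assumes H: "subgroup H G" and e: "bij_betw e {..<c} L" and a: "acts H L \<rho>"
  shows "fhset G H c (enc e c H \<rho>)"
proof -
  have inj: "inj_on e {..<c}" and im: "e ` {..<c} = L" using e by (auto simp: bij_betw_def)
  have into: "\<And>h i. h \<in> H \<Longrightarrow> i < c \<Longrightarrow> \<rho> h (e i) \<in> L" using a im unfolding acts_def by auto
  have bk: "\<And>y. y \<in> L \<Longrightarrow> the_inv_into {..<c} e y < c"
    using the_inv_into_into[OF inj] im by (metis lessThan_iff subset_refl)
  have ee: "\<And>y. y \<in> L \<Longrightarrow> e (the_inv_into {..<c} e y) = y"
    using f_the_inv_into_f[OF inj] im by auto
  have perm: "enc e c H \<rho> h permutes {..<c}" if h: "h \<in> H" for h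
  proof (rule inj_imp_permutes)
    show "inj_on (enc e c H \<rho> h) {..<c}"
    proof (rule inj_onI)
      fix i j assume ij: "i \<in> {..<c}" "j \<in> {..<c}" "enc e c H \<rho> h i = enc e c H \<rho> h j"
      then have "e (the_inv_into {..<c} e (\<rho> h (e i))) = e (the_inv_into {..<c} e (\<rho> h (e j)))"
        using h by (simp add: enc_def)
      then have "\<rho> h (e i) = \<rho> h (e j)" using ee into h ij by auto
      then have "e i = e j" using acts_inj[OF a H h] ij im by (auto dest: inj_onD)
      then show "i = j" using inj ij by (auto dest: inj_onD)
    qed
  qed (use h bk into in \<open>auto simp: enc_def\<close>)
  have hom: "enc e c H \<rho> (h \<otimes> h') = enc e c H \<rho> h \<circ> enc e c H \<rho> h'" if h: "h \<in> H" "h' \<in> H" for h h'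
  proof
    fix i
    have hh: "h \<otimes> h' \<in> H" by (rule subgroup.m_closed[OF H h])
    show "enc e c H \<rho> (h \<otimes> h') i = (enc e c H \<rho> h \<circ> enc e c H \<rho> h') i"
    proof (cases "i < c")
      case True
      have "\<rho> (h \<otimes> h') (e i) = \<rho> h (\<rho> h' (e i))" using a h True im unfolding acts_def by auto
      then show ?thesis using True h hh bk ee into by (simp add: enc_def)
    qed (use h hh in \<open>simp add: enc_def\<close>)
  qed
  have out: "\<forall>h. h \<notin> H \<longrightarrow> enc e c H \<rho> h = id" by (simp add: enc_def)
  show ?thesis unfolding fhset_def using H perm hom out by blast
qed

lemma enc_id: assumes "fhset G H n \<rho>" shows "enc id n H \<rho> = \<rho>"
proof (rule ext)+
  fix h i
  show "enc id n H \<rho> h i = \<rho> h i"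
  proof (cases "h \<in> H")
    case True
    then have p: "\<rho> h permutes {..<n}" using assms by (auto simp: fhset_def)
    show ?thesis
    proof (cases "i < n")
      case True
      then have "\<rho> h i < n" using p permutes_in_image by fastforce
      then show ?thesis using True \<open>h \<in> H\<close> by (simp add: enc_def the_inv_into_f_eq)
    next
      case False
      then show ?thesis using p \<open>h \<in> H\<close> by (simp add: enc_def permutes_not_in)
    qed
  qed (use assms in \<open>auto simp: enc_def fhset_def\<close>)
qed

end

lemma concat_map_if: "concat (map (\<lambda>l. if P l then [g l] else []) xs) = map g (filter P xs)"
  by (induction xs) auto

lemma distinct_concat_map:
  "distinct xs \<Longrightarrow> (\<forall>x\<in>set xs. distinct (F x)) \<Longrightarrow>
   (\<forall>x\<in>set xs. \<forall>y\<in>set xs. x \<noteq> y \<longrightarrow> set (F x) \<inter> set (F y) = {}) \<Longrightarrow> distinct (concat (map F xs))"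
  by (induction xs) auto

lemma leaves_corolla: "leaves (Node x (map Leaf [0..<n])) = [0..<n]"
  by (induction n) auto

context fo_ctx
begin

definition fixd :: "'g set \<Rightarrow> ('g \<Rightarrow> nat \<Rightarrow> nat) \<Rightarrow> 'x ftree \<Rightarrow> bool" where
  "fixd H \<rho> t \<longleftrightarrow> (\<forall>h\<in>H. iso (tree_act act h (\<rho> h) t) t)"

lemma adm_fo_iff: "(H, n, \<rho>) \<in> adm_fo G S act \<longleftrightarrow> fhset G H n \<rho> \<and> (\<exists>t. fo_wf S n t \<and> fixd H \<rho> t)"
  unfolding adm_fo_def fixd_def by (simp add: tree_eq_iff)

lemma fhset_perm: "fhset G H n \<rho> \<Longrightarrow> h \<in> H \<Longrightarrow> \<rho> h permutes {..<n}"
  by (simp add: fhset_def)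

lemma fhset_lt: "fhset G H n \<rho> \<Longrightarrow> h \<in> H \<Longrightarrow> i < n \<Longrightarrow> \<rho> h i < n"
  using fhset_perm permutes_in_image by fastforce

lemma fhset_sg: "fhset G H n \<rho> \<Longrightarrow> subgroup H G"
  by (simp add: fhset_def)

lemma fhset_hom: "fhset G H n \<rho> \<Longrightarrow> h \<in> H \<Longrightarrow> h' \<in> H \<Longrightarrow> \<rho> (h \<otimes> h') = \<rho> h \<circ> \<rho> h'"
  by (simp add: fhset_def)

lemma fhset_out: "fhset G H n \<rho> \<Longrightarrow> h \<notin> H \<Longrightarrow> \<rho> h = id"
  by (simp add: fhset_def)

lemma fhset_inv_apply: assumes "fhset G H n \<rho>" "h \<in> H" "i < n"
  shows "\<rho> (inv h) (\<rho> h i) = i"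
  using acts_inv(1)[OF fhset_acts[OF assms(1)] fhset_sg[OF assms(1)] assms(2)] assms(3) by simp

lemma tree_act_eq: "tree_act act g \<sigma> t = tree_relabel \<sigma> (tree_gact act g t)"
  by (simp add: tree_act_def)

lemma adm_seq_sub: "adm_seq G S act \<subseteq> adm_fo G S act"
proof
  fix T assume "T \<in> adm_seq G S act"
  then obtain H n \<rho> x where T: "T = (H, n, \<rho>)" and fh: "fhset G H n \<rho>" and x: "x \<in> S n"
    and fx: "\<forall>h\<in>H. act n h (\<rho> h) x = x"
    unfolding adm_seq_def by auto
  define t where "t = Node x (map Leaf [0..<n])"
  have lt: "leaves t = [0..<n]" unfolding t_def by (rule leaves_corolla)
  have lo: "labels_ok S t" unfolding t_def using x by simp
  have wf: "fo_wf S n t" unfolding fo_wf_def using lo lt by (simp add: atLeast0LessThan)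
  have "fixd H \<rho> t" unfolding fixd_def
  proof
    fix h assume h: "h \<in> H"
    have hc: "h \<in> carrier G" using subgroup.mem_carrier[OF fhset_sg[OF fh] h] .
    have p: "\<rho> h permutes {..<n}" using fhset_perm[OF fh h] .
    have ip: "pinv (\<rho> h) permutes {..<n}" using permutes_inv[OF p] .
    have "act n \<one> (pinv (\<rho> h)) x = act n \<one> (pinv (\<rho> h)) (act n h (\<rho> h) x)" using fx h by simp
    also have "\<dots> = act n (\<one> \<otimes> h) (pinv (\<rho> h) \<circ> \<rho> h) x"
      using act_comp[OF x one_closed hc ip p] by simp
    also have "\<dots> = act n h id x" using permutes_inv_o(2)[OF p] hc by simp
    finally have e: "act n h id x = act n \<one> (pinv (\<rho> h)) x" by simp
    have "tree_act act h (\<rho> h) t = Node (act n h id x) (map (\<lambda>i. Leaf (\<rho> h i)) [0..<n])"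
      by (simp add: t_def tree_act_def)
    also have "iso \<dots> (Node x (map Leaf [0..<n]))"
    proof (rule iso.iso_node[of _ _ "pinv (\<rho> h)"])
      show "rel (length (map Leaf [0..<n])) (pinv (\<rho> h)) (act n h id x) x"
        using e x by (simp add: rel_def)
      show "\<forall>i<length (map Leaf [0..<n]). iso (map (\<lambda>i. Leaf (\<rho> h i)) [0..<n] ! pinv (\<rho> h) i) (map Leaf [0..<n] ! i)"
      proof (intro allI impI)
        fix i assume i: "i < length (map Leaf [0..<n])"
        then have "pinv (\<rho> h) i < n" using permutes_in_image[OF ip] by simp
        then show "iso (map (\<lambda>i. Leaf (\<rho> h i)) [0..<n] ! pinv (\<rho> h) i) (map Leaf [0..<n] ! i)"
          using i permutes_inverses(1)[OF p] by (simp add: iso.iso_leaf)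
      qed
    qed (use ip in auto)
    finally show "iso (tree_act act h (\<rho> h) t) t" unfolding t_def .
  qed
  then show "T \<in> adm_fo G S act" using T fh wf adm_fo_iff by blast
qed

lemma adm_iso:
  assumes A: "(H, n, \<rho>) \<in> adm_fo G S act" and fh': "fhset G H n \<rho>'"
    and f: "bij_betw f {..<n} {..<n}" and eqv: "\<forall>h\<in>H. \<forall>i<n. f (\<rho>' h i) = \<rho> h (f i)"
  shows "(H, n, \<rho>') \<in> adm_fo G S act"
proof -
  from A obtain t where fh: "fhset G H n \<rho>" and wf: "fo_wf S n t" and fx: "fixd H \<rho> t"
    using adm_fo_iff by blast
  define g where "g = the_inv_into {..<n} f"
  have g: "bij_betw g {..<n} {..<n}" unfolding g_def by (rule bij_betw_the_inv_into[OF f])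
  have injf: "inj_on f {..<n}" using f by (simp add: bij_betw_def)
  have imf: "f ` {..<n} = {..<n}" using f by (simp add: bij_betw_def)
  have wf': "fo_wf S n (tree_relabel g t)"
    using wf g unfolding fo_wf_def bij_betw_def by (auto simp: leaves_relabel distinct_map)
  have "fixd H \<rho>' (tree_relabel g t)" unfolding fixd_def
  proof
    fix h assume h: "h \<in> H"
    have c: "\<forall>i\<in>set (leaves (tree_gact act h t)). (\<rho>' h \<circ> g) i = (g \<circ> \<rho> h) i"
    proof
      fix i assume "i \<in> set (leaves (tree_gact act h t))"
      then have i: "i < n" using wf by (simp add: fo_wf_def)
      define a where "a = g i"
      have a: "a < n" using g i unfolding a_def bij_betw_def by auto
      have fa: "f a = i" unfolding a_def g_def using f_the_inv_into_f[OF injf] imf i by auto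
      have "f (\<rho>' h a) = \<rho> h i" using eqv h a fa by auto
      moreover have "\<rho>' h a < n" using fhset_lt[OF fh' h a] .
      ultimately have "g (\<rho> h i) = \<rho>' h a" unfolding g_def by (metis the_inv_into_f_f injf lessThan_iff)
      then show "(\<rho>' h \<circ> g) i = (g \<circ> \<rho> h) i" by (simp add: a_def)
    qed
    have "tree_act act h (\<rho>' h) (tree_relabel g t) = tree_relabel (\<rho>' h \<circ> g) (tree_gact act h t)"
      by (simp add: tree_act_def gact_relabel relabel_relabel)
    also have "\<dots> = tree_relabel (g \<circ> \<rho> h) (tree_gact act h t)" using relabel_cong c by blast
    also have "\<dots> = tree_relabel g (tree_act act h (\<rho> h) t)" by (simp add: tree_act_def relabel_relabel)
    finally show "iso (tree_act act h (\<rho>' h) (tree_relabel g t)) (tree_relabel g t)"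
      using iso_relabel fx h unfolding fixd_def by auto
  qed
  then show ?thesis using adm_fo_iff fh' wf' by blast
qed

lemma adm_restrict:
  assumes A: "(H, n, \<rho>) \<in> adm_fo G S act" and K: "subgroup K G" and KH: "K \<subseteq> H"
  shows "(K, n, \<lambda>h. if h \<in> K then \<rho> h else id) \<in> adm_fo G S act"
proof -
  from A obtain t where fh: "fhset G H n \<rho>" and wf: "fo_wf S n t" and fx: "fixd H \<rho> t"
    using adm_fo_iff by blast
  have "fhset G K n (\<lambda>h. if h \<in> K then \<rho> h else id)"
    unfolding fhset_def using K KH fh fhset_hom[OF fh] by (auto simp: fhset_def subsetD[OF KH] subgroup.m_closed[OF K])
  moreover have "fixd K (\<lambda>h. if h \<in> K then \<rho> h else id) t" using fx KH by (auto simp: fixd_def)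
  ultimately show ?thesis using adm_fo_iff wf by blast
qed

end

context fo_ctx2
begin

lemma z_fixed: obtains z where "z \<in> S 0" "\<forall>g\<in>carrier G. act 0 g id z = z"
  using fix0 by (auto simp: level_has_G_fixed_def)

lemma y_fixed: obtains y where "y \<in> S 2" "\<forall>g\<in>carrier G. act 2 g id y = y"
  using fix2 by (auto simp: level_has_G_fixed_def)

lemma adm_trivial: "subgroup H G \<Longrightarrow> (H, n, \<lambda>h. id) \<in> adm_fo G S act"
proof -
  assume H: "subgroup H G"
  obtain t where wf: "fo_wf S n t" and fx: "\<forall>g\<in>carrier G. tree_gact act g t = t"
    using fixed_tree by blast
  have "fhset G H n (\<lambda>h. id)" using H by (simp add: fhset_def)
  moreover have "fixd H (\<lambda>h. id) t" unfolding fixd_def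
  proof
    fix h assume "h \<in> H"
    then have "h \<in> carrier G" using subgroup.mem_carrier[OF H] by simp
    then show "iso (tree_act act h id t) t" using fx by (simp add: tree_act_def relabel_id iso_refl)
  qed
  ultimately show ?thesis using adm_fo_iff wf by blast
qed

lemma adm_sub:
  assumes A: "(H, n, \<rho>) \<in> adm_fo G S act" and fh': "fhset G H m \<rho>'"
    and f: "inj_on f {..<m}" and fim: "f ` {..<m} \<subseteq> {..<n}"
    and eqv: "\<forall>h\<in>H. \<forall>i<m. f (\<rho>' h i) = \<rho> h (f i)"
  shows "(H, m, \<rho>') \<in> adm_fo G S act"
proof -
  from A obtain t where fh: "fhset G H n \<rho>" and wf: "fo_wf S n t" and fx: "fixd H \<rho> t"
    using adm_fo_iff by blast
  have Hs: "subgroup H G" using fhset_sg[OF fh] .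
  obtain z where z: "z \<in> S 0" "\<forall>g\<in>carrier G. act 0 g id z = z" by (rule z_fixed)
  define F where "F = f ` {..<m}"
  define g where "g = the_inv_into {..<m} f"
  define \<phi> where "\<phi> = (\<lambda>l. if l \<in> F then Leaf (g l) else Node z [])"
  have gF: "\<And>a. a < m \<Longrightarrow> g (f a) = a" unfolding g_def using the_inv_into_f_f[OF f] by simp
  have lv: "leaves (subst t \<phi>) = map g (filter (\<lambda>l. l \<in> F) (leaves t))"
  proof -
    have "leaves (subst t \<phi>) = concat (map (\<lambda>l. if l \<in> F then [g l] else []) (leaves t))"
      unfolding leaves_subst \<phi>_def by (intro arg_cong[where f=concat] map_cong) auto
    then show ?thesis by (simp add: concat_map_if)
  qed
  have injg: "inj_on g F" unfolding g_def F_def using inj_on_the_inv_into[OF f] .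
  have gim: "g ` F = {..<m}" unfolding g_def F_def using the_inv_into_onto[OF f] .
  have FL: "F \<subseteq> set (leaves t)" using fim wf unfolding F_def fo_wf_def by auto
  have wf': "fo_wf S m (subst t \<phi>)"
    unfolding fo_wf_def
  proof (intro conjI)
    show "labels_ok S (subst t \<phi>)"
      using wf z by (intro labels_ok_subst) (auto simp: fo_wf_def \<phi>_def)
    show "distinct (leaves (subst t \<phi>))" unfolding lv using wf injg
      by (auto simp: fo_wf_def distinct_map intro: inj_on_subset)
    have "{l \<in> set (leaves t). l \<in> F} = F" using FL by auto
    then show "set (leaves (subst t \<phi>)) = {..<m}" unfolding lv using gim by simp
  qed
  have "fixd H \<rho>' (subst t \<phi>)" unfolding fixd_def
  proof
    fix h assume h: "h \<in> H"
    have hc: "h \<in> carrier G" using subgroup.mem_carrier[OF Hs h] .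
    have hi: "inv h \<in> H" using subgroup.m_inv_closed[OF Hs h] .
    have c: "\<forall>l\<in>set (leaves (tree_gact act h t)). (tree_relabel (\<rho>' h) \<circ> (tree_gact act h \<circ> \<phi>)) l = (\<phi> \<circ> \<rho> h) l"
    proof
      fix l assume "l \<in> set (leaves (tree_gact act h t))"
      then have l: "l < n" using wf by (simp add: fo_wf_def)
      show "(tree_relabel (\<rho>' h) \<circ> (tree_gact act h \<circ> \<phi>)) l = (\<phi> \<circ> \<rho> h) l"
      proof (cases "l \<in> F")
        case True
        then obtain a where a: "a < m" "l = f a" unfolding F_def by auto
        have "\<rho> h l = f (\<rho>' h a)" using eqv h a by auto
        moreover have "\<rho>' h a < m" using fhset_lt[OF fh' h a(1)] .
        ultimately have "\<phi> (\<rho> h l) = Leaf (\<rho>' h a)" unfolding \<phi>_def F_def using gF by auto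
        moreover have "\<phi> l = Leaf a" unfolding \<phi>_def using True a gF by auto
        ultimately show ?thesis by simp
      next
        case False
        have "\<rho> h l \<notin> F"
        proof
          assume "\<rho> h l \<in> F"
          then obtain a where a: "a < m" "\<rho> h l = f a" unfolding F_def by auto
          have "l = \<rho> (inv h) (\<rho> h l)" using fhset_inv_apply[OF fh h l] by simp
          also have "\<dots> = f (\<rho>' (inv h) a)" using eqv hi a by auto
          finally show False using False fhset_lt[OF fh' hi a(1)] unfolding F_def by auto
        qed
        then show ?thesis using False z hc unfolding \<phi>_def by simp
      qed
    qed
    have "tree_act act h (\<rho>' h) (subst t \<phi>) = subst (tree_gact act h t) (tree_relabel (\<rho>' h) \<circ> (tree_gact act h \<circ> \<phi>))"
      by (simp add: tree_act_def gact_subst relabel_subst)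
    also have "\<dots> = subst (tree_gact act h t) (\<phi> \<circ> \<rho> h)" using subst_cong c by blast
    also have "\<dots> = subst (tree_act act h (\<rho> h) t) \<phi>" by (simp add: tree_act_def subst_relabel)
    finally show "iso (tree_act act h (\<rho>' h) (subst t \<phi>)) (subst t \<phi>)"
      using iso_subst1 fx h unfolding fixd_def by auto
  qed
  then show ?thesis using adm_fo_iff fh' wf' by blast
qed

end

lemma pm_divmod: "b < (m::nat) \<Longrightarrow> (a * m + b) div m = a \<and> (a * m + b) mod m = b"
  by auto

lemma pm_inj: "j < (m::nat) \<Longrightarrow> j' < m \<Longrightarrow> x * m + j = y * m + j' \<Longrightarrow> x = y \<and> j = j'"
  by (metis pm_divmod)

lemma pm_lt: "a < (n::nat) \<Longrightarrow> b < m \<Longrightarrow> a * m + b < n * m"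
proof -
  assume "a < n" "b < m"
  then have "a * m + b < a * m + m" by simp
  also have "\<dots> = (a + 1) * m" by simp
  also have "\<dots> \<le> n * m" using \<open>a < n\<close> by (intro mult_right_mono) auto
  finally show ?thesis .
qed

lemma dm_lt: "i < n * (m::nat) \<Longrightarrow> i div m < n \<and> i mod m < m"
proof -
  assume i: "i < n * m"
  then have "m > 0" by (cases m) auto
  then show ?thesis using i by (simp add: less_mult_imp_div_less mult.commute)
qed

context fo_ctx
begin

lemma inv_cancel1: "g \<in> carrier G \<Longrightarrow> x \<in> carrier G \<Longrightarrow> inv g \<otimes> (g \<otimes> x) = x"
  by (simp add: m_assoc[symmetric])

lemma inv_cancel2: "g \<in> carrier G \<Longrightarrow> x \<in> carrier G \<Longrightarrow> g \<otimes> (inv g \<otimes> x) = x"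
  by (simp add: m_assoc[symmetric])

lemma conj_mult: "g \<in> carrier G \<Longrightarrow> k \<in> carrier G \<Longrightarrow> k' \<in> carrier G \<Longrightarrow>
  g \<otimes> k \<otimes> inv g \<otimes> (g \<otimes> k' \<otimes> inv g) = g \<otimes> (k \<otimes> k') \<otimes> inv g"
  by (simp add: m_assoc inv_cancel1 inv_cancel2)

lemma conj_inv: "g \<in> carrier G \<Longrightarrow> k \<in> carrier G \<Longrightarrow> inv (g \<otimes> k \<otimes> inv g) = g \<otimes> inv k \<otimes> inv g"
  by (simp add: inv_mult_group m_assoc)

lemma conj_back: "g \<in> carrier G \<Longrightarrow> k \<in> carrier G \<Longrightarrow> inv g \<otimes> (g \<otimes> k \<otimes> inv g) \<otimes> g = k"
  by (simp add: m_assoc inv_cancel1 inv_cancel2)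

lemma conj_g: "g \<in> carrier G \<Longrightarrow> k \<in> carrier G \<Longrightarrow> g \<otimes> k \<otimes> inv g \<otimes> g = g \<otimes> k"
  by (simp add: m_assoc inv_cancel1 inv_cancel2)

lemma adm_conj:
  assumes A: "(H, n, \<rho>) \<in> adm_fo G S act" and g: "g \<in> carrier G"
  shows "((\<lambda>h. g \<otimes> h \<otimes> inv g) ` H, n,
         \<lambda>h. if h \<in> (\<lambda>h. g \<otimes> h \<otimes> inv g) ` H then \<rho> (inv g \<otimes> h \<otimes> g) else id) \<in> adm_fo G S act"
proof -
  from A obtain t where fh: "fhset G H n \<rho>" and wf: "fo_wf S n t" and fx: "fixd H \<rho> t"
    using adm_fo_iff by blast
  have Hs: "subgroup H G" using fhset_sg[OF fh] .
  have Hc: "\<And>k. k \<in> H \<Longrightarrow> k \<in> carrier G" using subgroup.mem_carrier[OF Hs] .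
  define c where "c = (\<lambda>h. g \<otimes> h \<otimes> inv g)"
  define \<rho>'' where "\<rho>'' = (\<lambda>h. if h \<in> c ` H then \<rho> (inv g \<otimes> h \<otimes> g) else id)"
  have bck: "\<And>k. k \<in> H \<Longrightarrow> inv g \<otimes> c k \<otimes> g = k" unfolding c_def using conj_back g Hc by blast
  have sg: "subgroup (c ` H) G"
  proof (rule subgroupI)
    show "c ` H \<subseteq> carrier G" unfolding c_def using g Hc by auto
    show "c ` H \<noteq> {}" using subgroup.one_closed[OF Hs] by blast
    show "inv a \<in> c ` H" if "a \<in> c ` H" for a
    proof -
      from that obtain k where k: "k \<in> H" "a = c k" by auto
      have "inv a = c (inv k)" unfolding k(2) c_def using conj_inv g Hc k(1) by blast
      then show ?thesis using subgroup.m_inv_closed[OF Hs k(1)] by blast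
    qed
    show "a \<otimes> b \<in> c ` H" if "a \<in> c ` H" "b \<in> c ` H" for a b
    proof -
      from that obtain k k' where k: "k \<in> H" "a = c k" "k' \<in> H" "b = c k'" by auto
      have "a \<otimes> b = c (k \<otimes> k')" unfolding k(2,4) c_def using conj_mult g Hc k(1,3) by blast
      then show ?thesis using subgroup.m_closed[OF Hs k(1,3)] by blast
    qed
  qed
  have rc: "\<And>k. k \<in> H \<Longrightarrow> \<rho>'' (c k) = \<rho> k" unfolding \<rho>''_def using bck by auto
  have fh'': "fhset G (c ` H) n \<rho>''"
    unfolding fhset_def
  proof (intro conjI ballI allI impI)
    show "subgroup (c ` H) G" by (rule sg)
    fix h assume "h \<in> c ` H"
    then obtain k where k: "k \<in> H" "h = c k" by auto
    show "\<rho>'' h permutes {..<n}" using rc k fhset_perm[OF fh k(1)] by simp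
  next
    fix h h' assume "h \<in> c ` H" "h' \<in> c ` H"
    then obtain k k' where k: "k \<in> H" "h = c k" "k' \<in> H" "h' = c k'" by auto
    have "h \<otimes> h' = c (k \<otimes> k')" unfolding k(2,4) c_def using conj_mult g Hc k(1,3) by blast
    then show "\<rho>'' (h \<otimes> h') = \<rho>'' h \<circ> \<rho>'' h'"
      using rc k subgroup.m_closed[OF Hs k(1,3)] fhset_hom[OF fh k(1,3)] by simp
  next
    fix h assume "h \<notin> c ` H" then show "\<rho>'' h = id" unfolding \<rho>''_def by simp
  qed
  have wf': "fo_wf S n (tree_gact act g t)" using wf labels_ok_gact[OF g] by (simp add: fo_wf_def)
  have "fixd (c ` H) \<rho>'' (tree_gact act g t)" unfolding fixd_def
  proof
    fix h assume "h \<in> c ` H"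
    then obtain k where k: "k \<in> H" "h = c k" by auto
    have kc: "k \<in> carrier G" using Hc k(1) .
    have lo: "labels_ok S t" using wf by (simp add: fo_wf_def)
    have "tree_act act h (\<rho>'' h) (tree_gact act g t) = tree_relabel (\<rho> k) (tree_gact act (c k \<otimes> g) t)"
      using rc k gact_gact[OF _ g lo, of "c k"] g kc unfolding c_def by (simp add: tree_act_def)
    also have "c k \<otimes> g = g \<otimes> k" unfolding c_def using conj_g g kc by blast
    also have "tree_relabel (\<rho> k) (tree_gact act (g \<otimes> k) t) = tree_gact act g (tree_act act k (\<rho> k) t)"
      using gact_gact[OF g kc lo] by (simp add: tree_act_def gact_relabel)
    finally show "iso (tree_act act h (\<rho>'' h) (tree_gact act g t)) (tree_gact act g t)"
      using iso_gact[OF _ g] fx k(1) unfolding fixd_def by auto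
  qed
  then show ?thesis using adm_fo_iff fh'' wf' unfolding c_def \<rho>''_def by blast
qed

end

context fo_ctx2
begin

lemma adm_coprod:
  assumes A1: "(H, n, \<rho>) \<in> adm_fo G S act" and A2: "(H, m, \<rho>') \<in> adm_fo G S act"
  shows "(H, n + m, \<lambda>h. if h \<in> H then (\<lambda>i. if i < n then \<rho> h i
                                     else if i < n + m then n + \<rho>' h (i - n) else i)
                      else id) \<in> adm_fo G S act"
proof -
  from A1 obtain t1 where fh1: "fhset G H n \<rho>" and wf1: "fo_wf S n t1" and fx1: "fixd H \<rho> t1"
    using adm_fo_iff by blast
  from A2 obtain t2 where fh2: "fhset G H m \<rho>'" and wf2: "fo_wf S m t2" and fx2: "fixd H \<rho>' t2"
    using adm_fo_iff by blast
  have Hs: "subgroup H G" using fhset_sg[OF fh1] .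
  define \<sigma> where "\<sigma> = (\<lambda>h. if h \<in> H then (\<lambda>i. if i < n then \<rho> h i
                                     else if i < n + m then n + \<rho>' h (i - n) else i)
                      else id)"
  have s_lt: "\<And>h i. h \<in> H \<Longrightarrow> i < n + m \<Longrightarrow> \<sigma> h i < n + m"
  proof -
    fix h i assume h: "h \<in> H" and i: "i < n + m"
    show "\<sigma> h i < n + m"
    proof (cases "i < n")
      case True then show ?thesis using fhset_lt[OF fh1 h True] h by (simp add: \<sigma>_def)
    next
      case False then have "i - n < m" using i by simp
      then show ?thesis using fhset_lt[OF fh2 h] h False i by (simp add: \<sigma>_def)
    qed
  qed
  have fhs: "fhset G H (n + m) \<sigma>"
    unfolding fhset_def
  proof (intro conjI ballI allI impI)
    show "subgroup H G" by (rule Hs)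
  next
    fix h assume h: "h \<in> H"
    show "\<sigma> h permutes {..<n + m}"
    proof (rule inj_imp_permutes)
      show "inj_on (\<sigma> h) {..<n + m}"
      proof (rule inj_onI)
        fix i j assume ij: "i \<in> {..<n + m}" "j \<in> {..<n + m}" "\<sigma> h i = \<sigma> h j"
        have in1: "inj (\<rho> h)" using permutes_inj[OF fhset_perm[OF fh1 h]] .
        have in2: "inj (\<rho>' h)" using permutes_inj[OF fhset_perm[OF fh2 h]] .
        show "i = j"
        proof (cases "i < n"; cases "j < n")
          assume "i < n" "j < n" then show ?thesis using ij h in1 by (simp add: \<sigma>_def inj_eq)
        next
          assume "i < n" "\<not> j < n" then show ?thesis using ij h fhset_lt[OF fh1 h, of i] by (simp add: \<sigma>_def)
        next
          assume "\<not> i < n" "j < n" then show ?thesis using ij h fhset_lt[OF fh1 h, of j] by (simp add: \<sigma>_def)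
        next
          assume "\<not> i < n" "\<not> j < n"
          then have "\<rho>' h (i - n) = \<rho>' h (j - n)" using ij h by (simp add: \<sigma>_def)
          then have "i - n = j - n" using in2 by (simp add: inj_eq)
          then show ?thesis using \<open>\<not> i < n\<close> \<open>\<not> j < n\<close> by simp
        qed
      qed
    qed (use h s_lt in \<open>auto simp: \<sigma>_def\<close>)
  next
    fix h h' assume h: "h \<in> H" and h': "h' \<in> H"
    have hh: "h \<otimes> h' \<in> H" using subgroup.m_closed[OF Hs h h'] .
    show "\<sigma> (h \<otimes> h') = \<sigma> h \<circ> \<sigma> h'"
    proof
      fix i
      show "\<sigma> (h \<otimes> h') i = (\<sigma> h \<circ> \<sigma> h') i"
      proof (cases "i < n")
        case True then show ?thesis
          using h h' hh fhset_lt[OF fh1 h' True] fhset_hom[OF fh1 h h'] by (simp add: \<sigma>_def)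
      next
        case False
        show ?thesis
        proof (cases "i < n + m")
          case True
          then have "i - n < m" using False by simp
          then show ?thesis using h h' hh False True fhset_lt[OF fh2 h'] fhset_hom[OF fh2 h h'] by (simp add: \<sigma>_def)
        next
          case F2: False then show ?thesis using h h' hh False by (simp add: \<sigma>_def)
        qed
      qed
    qed
  next
    fix h assume "h \<notin> H" then show "\<sigma> h = id" by (simp add: \<sigma>_def)
  qed
  obtain y where y: "y \<in> S 2" "\<forall>g\<in>carrier G. act 2 g id y = y" by (rule y_fixed)
  define T where "T = Node y [t1, tree_relabel ((+) n) t2]"
  have lT: "leaves T = leaves t1 @ map ((+) n) (leaves t2)" by (simp add: T_def leaves_relabel)
  have wfT: "fo_wf S (n + m) T"
    unfolding fo_wf_def
  proof (intro conjI)
    show "labels_ok S T" using y wf1 wf2 by (simp add: T_def fo_wf_def numeral_2_eq_2)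
    show "distinct (leaves T)" unfolding lT using wf1 wf2 by (auto simp: fo_wf_def distinct_map)
    have "(+) n ` {..<m} = {n..<n+m}"
    proof
      show "(+) n ` {..<m} \<subseteq> {n..<n+m}" by auto
      show "{n..<n+m} \<subseteq> (+) n ` {..<m}"
      proof
        fix x assume "x \<in> {n..<n+m}"
        then have "x - n < m" "x = n + (x - n)" by auto
        then show "x \<in> (+) n ` {..<m}" by blast
      qed
    qed
    then show "set (leaves T) = {..<n + m}" unfolding lT using wf1 wf2 by (auto simp: fo_wf_def)
  qed
  have "fixd H \<sigma> T" unfolding fixd_def
  proof
    fix h assume h: "h \<in> H"
    have hc: "h \<in> carrier G" using subgroup.mem_carrier[OF Hs h] .
    have e1: "tree_relabel (\<sigma> h) (tree_gact act h t1) = tree_act act h (\<rho> h) t1"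
      unfolding tree_act_def by (rule relabel_cong) (use wf1 h in \<open>auto simp: fo_wf_def \<sigma>_def\<close>)
    have "tree_relabel (\<sigma> h) (tree_gact act h (tree_relabel ((+) n) t2)) = tree_relabel (\<sigma> h \<circ> (+) n) (tree_gact act h t2)"
      by (simp add: gact_relabel relabel_relabel)
    also have "\<dots> = tree_relabel ((+) n \<circ> \<rho>' h) (tree_gact act h t2)"
      by (rule relabel_cong) (use wf2 h in \<open>auto simp: fo_wf_def \<sigma>_def\<close>)
    also have "\<dots> = tree_relabel ((+) n) (tree_act act h (\<rho>' h) t2)" by (simp add: tree_act_def relabel_relabel)
    finally have e2: "tree_relabel (\<sigma> h) (tree_gact act h (tree_relabel ((+) n) t2)) = tree_relabel ((+) n) (tree_act act h (\<rho>' h) t2)" .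
    have "tree_act act h (\<sigma> h) T = Node y [tree_act act h (\<rho> h) t1, tree_relabel ((+) n) (tree_act act h (\<rho>' h) t2)]"
      using y hc e1 e2 by (simp add: T_def tree_act_def numeral_2_eq_2)
    also have "iso \<dots> T" unfolding T_def
    proof (rule iso.iso_node[of _ _ id])
      show "\<forall>i<length [t1, tree_relabel ((+) n) t2].
        iso ([tree_act act h (\<rho> h) t1, tree_relabel ((+) n) (tree_act act h (\<rho>' h) t2)] ! id i) ([t1, tree_relabel ((+) n) t2] ! i)"
      proof (intro allI impI)
        fix i assume "i < length [t1, tree_relabel ((+) n) t2]"
        then have "i = 0 \<or> i = 1" by auto
        then show "iso ([tree_act act h (\<rho> h) t1, tree_relabel ((+) n) (tree_act act h (\<rho>' h) t2)] ! id i) ([t1, tree_relabel ((+) n) t2] ! i)"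
          using fx1 fx2 h iso_relabel unfolding fixd_def by auto
      qed
    qed (auto simp: rel_refl)
    finally show "iso (tree_act act h (\<sigma> h) T) T" .
  qed
  then show ?thesis using adm_fo_iff fhs wfT unfolding \<sigma>_def by blast
qed

lemma adm_prod:
  assumes A1: "(H, n, \<rho>) \<in> adm_fo G S act" and A2: "(H, m, \<rho>') \<in> adm_fo G S act"
  shows "(H, n * m, \<lambda>h. if h \<in> H then (\<lambda>i. if i < n * m
                                          then \<rho> h (i div m) * m + \<rho>' h (i mod m) else i)
                      else id) \<in> adm_fo G S act"
proof -
  from A1 obtain t1 where fh1: "fhset G H n \<rho>" and wf1: "fo_wf S n t1" and fx1: "fixd H \<rho> t1"
    using adm_fo_iff by blast
  from A2 obtain t2 where fh2: "fhset G H m \<rho>'" and wf2: "fo_wf S m t2" and fx2: "fixd H \<rho>' t2"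
    using adm_fo_iff by blast
  have Hs: "subgroup H G" using fhset_sg[OF fh1] .
  define \<sigma> where "\<sigma> = (\<lambda>h. if h \<in> H then (\<lambda>i. if i < n * m
                                          then \<rho> h (i div m) * m + \<rho>' h (i mod m) else i)
                      else id)"
  have s_in: "\<And>h i. h \<in> H \<Longrightarrow> i < n * m \<Longrightarrow> \<sigma> h i = \<rho> h (i div m) * m + \<rho>' h (i mod m)
     \<and> \<rho> h (i div m) < n \<and> \<rho>' h (i mod m) < m"
  proof -
    fix h i assume h: "h \<in> H" and i: "i < n * m"
    have "i div m < n" "i mod m < m" using dm_lt[OF i] by auto
    then show "\<sigma> h i = \<rho> h (i div m) * m + \<rho>' h (i mod m) \<and> \<rho> h (i div m) < n \<and> \<rho>' h (i mod m) < m"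
      using fhset_lt[OF fh1 h] fhset_lt[OF fh2 h] h i by (simp add: \<sigma>_def)
  qed
  have fhs: "fhset G H (n * m) \<sigma>"
    unfolding fhset_def
  proof (intro conjI ballI allI impI)
    show "subgroup H G" by (rule Hs)
  next
    fix h assume h: "h \<in> H"
    show "\<sigma> h permutes {..<n * m}"
    proof (rule inj_imp_permutes)
      show "inj_on (\<sigma> h) {..<n * m}"
      proof (rule inj_onI)
        fix i j assume ij: "i \<in> {..<n * m}" "j \<in> {..<n * m}" "\<sigma> h i = \<sigma> h j"
        have in1: "inj (\<rho> h)" using permutes_inj[OF fhset_perm[OF fh1 h]] .
        have in2: "inj (\<rho>' h)" using permutes_inj[OF fhset_perm[OF fh2 h]] .
        have si: "\<sigma> h i = \<rho> h (i div m) * m + \<rho>' h (i mod m)" "\<rho>' h (i mod m) < m"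
          using ij(1) s_in[OF h, of i] by auto
        have sj: "\<sigma> h j = \<rho> h (j div m) * m + \<rho>' h (j mod m)" "\<rho>' h (j mod m) < m"
          using ij(2) s_in[OF h, of j] by auto
        have "\<rho> h (i div m) = \<rho> h (j div m) \<and> \<rho>' h (i mod m) = \<rho>' h (j mod m)"
          using pm_inj[OF si(2) sj(2)] ij(3) si(1) sj(1) by simp
        then have "i div m = j div m" "i mod m = j mod m" using in1 in2 by (auto simp: inj_eq)
        then show "i = j" by (metis div_mult_mod_eq)
      qed
    next
      show "finite {..<n * m}" by simp
    next
      fix i assume "i \<in> {..<n * m}"
      then show "\<sigma> h i \<in> {..<n * m}" using s_in[OF h, of i] pm_lt by simp
    next
      fix i assume "i \<notin> {..<n * m}"
      then show "\<sigma> h i = i" using h by (simp add: \<sigma>_def)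
    qed
  next
    fix h h' assume h: "h \<in> H" and h': "h' \<in> H"
    have hh: "h \<otimes> h' \<in> H" using subgroup.m_closed[OF Hs h h'] .
    show "\<sigma> (h \<otimes> h') = \<sigma> h \<circ> \<sigma> h'"
    proof
      fix i
      show "\<sigma> (h \<otimes> h') i = (\<sigma> h \<circ> \<sigma> h') i"
      proof (cases "i < n * m")
        case True
        have a: "\<sigma> h' i = \<rho> h' (i div m) * m + \<rho>' h' (i mod m)" "\<rho> h' (i div m) < n" "\<rho>' h' (i mod m) < m"
          using s_in[OF h' True] by auto
        have lt: "\<sigma> h' i < n * m" using a pm_lt by simp
        have "(\<sigma> h' i) div m = \<rho> h' (i div m)" "(\<sigma> h' i) mod m = \<rho>' h' (i mod m)" using a pm_divmod by auto
        then show ?thesis using s_in[OF hh True] s_in[OF h lt] fhset_hom[OF fh1 h h'] fhset_hom[OF fh2 h h'] by simp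
      next
        case False then show ?thesis using h h' hh by (simp add: \<sigma>_def)
      qed
    qed
  next
    fix h assume "h \<notin> H" then show "\<sigma> h = id" by (simp add: \<sigma>_def)
  qed
  define F where "F = (\<lambda>i. tree_relabel (\<lambda>j. i * m + j) t2)"
  define T where "T = subst t1 F"
  have lT: "leaves T = concat (map (\<lambda>i. map (\<lambda>j. i * m + j) (leaves t2)) (leaves t1))"
    by (simp add: T_def F_def leaves_subst leaves_relabel)
  have wfT: "fo_wf S (n * m) T"
    unfolding fo_wf_def
  proof (intro conjI)
    show "labels_ok S T" unfolding T_def F_def using wf1 wf2 by (intro labels_ok_subst) (auto simp: fo_wf_def)
    show "distinct (leaves T)" unfolding lT
    proof (rule distinct_concat_map)
      show "distinct (leaves t1)" using wf1 by (simp add: fo_wf_def)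
      show "\<forall>x\<in>set (leaves t1). distinct (map (\<lambda>j. x * m + j) (leaves t2))"
        using wf2 by (auto simp: fo_wf_def distinct_map inj_on_def)
      show "\<forall>x\<in>set (leaves t1). \<forall>y\<in>set (leaves t1). x \<noteq> y \<longrightarrow>
          set (map (\<lambda>j. x * m + j) (leaves t2)) \<inter> set (map (\<lambda>j. y * m + j) (leaves t2)) = {}"
      proof (intro ballI impI)
        fix x y assume "x \<in> set (leaves t1)" "y \<in> set (leaves t1)" "x \<noteq> y"
        then show "set (map (\<lambda>j. x * m + j) (leaves t2)) \<inter> set (map (\<lambda>j. y * m + j) (leaves t2)) = {}"
        proof -
          have "False" if "z \<in> set (map (\<lambda>j. x * m + j) (leaves t2))" "z \<in> set (map (\<lambda>j. y * m + j) (leaves t2))" for z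
          proof -
            from that obtain j j' where jj: "j \<in> set (leaves t2)" "j' \<in> set (leaves t2)" "z = x * m + j" "z = y * m + j'"
              by auto
            have "j < m" "j' < m" using jj(1,2) wf2 by (auto simp: fo_wf_def)
            then have "x = y" using pm_inj jj(3,4) by metis
            then show False using \<open>x \<noteq> y\<close> by simp
          qed
          then show ?thesis by blast
        qed
      qed
    qed
    show "set (leaves T) = {..<n * m}"
    proof
      show "set (leaves T) \<subseteq> {..<n * m}"
      proof
        fix x assume "x \<in> set (leaves T)"
        then obtain a j where aj: "a \<in> set (leaves t1)" "j \<in> set (leaves t2)" "x = a * m + j" unfolding lT by auto
        have "a < n" "j < m" using aj(1,2) wf1 wf2 by (auto simp: fo_wf_def)
        then show "x \<in> {..<n * m}" using pm_lt aj(3) by simp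
      qed
      show "{..<n * m} \<subseteq> set (leaves T)"
      proof
        fix i assume "i \<in> {..<n * m}"
        then have i: "i < n * m" by simp
        have m1: "i div m \<in> set (leaves t1)" using dm_lt[OF i] wf1 by (simp add: fo_wf_def)
        have m2: "i mod m \<in> set (leaves t2)" using dm_lt[OF i] wf2 by (simp add: fo_wf_def)
        have "i \<in> (\<lambda>j. (i div m) * m + j) ` set (leaves t2)" using m2 div_mult_mod_eq[of i m] by (metis image_eqI)
        then show "i \<in> set (leaves T)" unfolding lT using m1 by auto
      qed
    qed
  qed
  have "fixd H \<sigma> T" unfolding fixd_def
  proof
    fix h assume h: "h \<in> H"
    have hc: "h \<in> carrier G" using subgroup.mem_carrier[OF Hs h] .
    have c: "\<forall>i\<in>set (leaves (tree_gact act h t1)).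
       iso ((tree_relabel (\<sigma> h) \<circ> (tree_gact act h \<circ> F)) i) ((F \<circ> \<rho> h) i)"
    proof
      fix i assume "i \<in> set (leaves (tree_gact act h t1))"
      then have i: "i < n" using wf1 by (simp add: fo_wf_def)
      have "(tree_relabel (\<sigma> h) \<circ> (tree_gact act h \<circ> F)) i = tree_relabel (\<sigma> h \<circ> (\<lambda>j. i * m + j)) (tree_gact act h t2)"
        by (simp add: F_def gact_relabel relabel_relabel)
      also have "\<dots> = tree_relabel ((\<lambda>j. \<rho> h i * m + j) \<circ> \<rho>' h) (tree_gact act h t2)"
      proof (rule relabel_cong, rule ballI)
        fix j assume "j \<in> set (leaves (tree_gact act h t2))"
        then have j: "j < m" using wf2 by (simp add: fo_wf_def)
        have "i * m + j < n * m" using pm_lt[OF i j] .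
        then show "(\<sigma> h \<circ> (\<lambda>j. i * m + j)) j = ((\<lambda>j. \<rho> h i * m + j) \<circ> \<rho>' h) j"
          using s_in[OF h] pm_divmod[OF j] by simp
      qed
      also have "\<dots> = tree_relabel (\<lambda>j. \<rho> h i * m + j) (tree_act act h (\<rho>' h) t2)"
        by (simp add: tree_act_def relabel_relabel)
      finally show "iso ((tree_relabel (\<sigma> h) \<circ> (tree_gact act h \<circ> F)) i) ((F \<circ> \<rho> h) i)"
        using iso_relabel fx2 h unfolding fixd_def F_def by auto
    qed
    have "tree_act act h (\<sigma> h) T = subst (tree_gact act h t1) (tree_relabel (\<sigma> h) \<circ> (tree_gact act h \<circ> F))"
      by (simp add: T_def tree_act_def gact_subst relabel_subst)
    moreover have "iso \<dots> (subst (tree_gact act h t1) (F \<circ> \<rho> h))" using iso_subst2 c by blast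
    moreover have "subst (tree_gact act h t1) (F \<circ> \<rho> h) = subst (tree_act act h (\<rho> h) t1) F"
      by (simp add: tree_act_def subst_relabel)
    moreover have "iso (subst (tree_act act h (\<rho> h) t1) F) T"
      unfolding T_def using iso_subst1 fx1 h unfolding fixd_def by auto
    ultimately show "iso (tree_act act h (\<sigma> h) T) T" using iso_trans by metis
  qed
  then show ?thesis using adm_fo_iff fhs wfT unfolding \<sigma>_def by blast
qed

end

context fo_ctx2
begin

lemma adm_selfind:
  assumes Hs: "subgroup H G" and Ks: "subgroup K G" and KH: "K \<subseteq> H"
    and AK: "(K, n, \<rho>) \<in> adm_fo G S act"
    and AH: "(H, m, \<tau>) \<in> adm_fo G S act" and ind0: "induced_hset G H K 1 (\<lambda>h. id) m \<tau>"
    and fh': "fhset G H N \<rho>'" and ind: "induced_hset G H K n \<rho> N \<rho>'"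
  shows "(H, N, \<rho>') \<in> adm_fo G S act"
proof -
  from AK obtain tK where fhK: "fhset G K n \<rho>" and wfK: "fo_wf S n tK" and fxK: "fixd K \<rho> tK"
    using adm_fo_iff by blast
  from AH obtain u where fhH: "fhset G H m \<tau>" and wfu: "fo_wf S m u" and fxu: "fixd H \<tau> u"
    using adm_fo_iff by blast
  have Hc: "\<And>k. k \<in> H \<Longrightarrow> k \<in> carrier G" using subgroup.mem_carrier[OF Hs] .
  have KH': "\<And>k. k \<in> K \<Longrightarrow> k \<in> H" using KH by blast
  have oneH: "\<one> \<in> H" using subgroup.one_closed[OF Hs] .
  have Kinv: "\<And>k. k \<in> K \<Longrightarrow> inv k \<in> K" using subgroup.m_inv_closed[OF Ks] .
  have loK: "labels_ok S tK" using wfK by (simp add: fo_wf_def)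
  have "\<exists>j0::nat\<Rightarrow>nat. (\<forall>t<1. j0 t < m) \<and> (\<forall>x<m. \<exists>h\<in>H. \<exists>t<1. x = \<tau> h (j0 t)) \<and>
    (\<forall>h\<in>H. \<forall>h'\<in>H. \<forall>t<1. \<forall>t'<1. \<tau> h (j0 t) = \<tau> h' (j0 t') \<longleftrightarrow> (\<exists>k\<in>K. h' = h \<otimes> k \<and> t = id t'))" using ind0 unfolding induced_hset_def .
  then obtain j0 :: "nat \<Rightarrow> nat" where J0: "(\<forall>t<1. j0 t < m) \<and> (\<forall>x<m. \<exists>h\<in>H. \<exists>t<1. x = \<tau> h (j0 t)) \<and>
    (\<forall>h\<in>H. \<forall>h'\<in>H. \<forall>t<1. \<forall>t'<1. \<tau> h (j0 t) = \<tau> h' (j0 t') \<longleftrightarrow> (\<exists>k\<in>K. h' = h \<otimes> k \<and> t = id t'))" ..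
  note j0a = conjunct1[OF J0] and j0b = conjunct1[OF conjunct2[OF J0]] and j0c = conjunct2[OF conjunct2[OF J0]]
  have j0: "j0 0 < m" using j0a by simp
  have sur0: "\<And>x. x < m \<Longrightarrow> \<exists>h\<in>H. x = \<tau> h (j0 0)" using j0b by auto
  have iff0: "\<And>h h'. h \<in> H \<Longrightarrow> h' \<in> H \<Longrightarrow> \<tau> h (j0 0) = \<tau> h' (j0 0) \<longleftrightarrow> (\<exists>k\<in>K. h' = h \<otimes> k)"
    using j0c by auto
  have "\<exists>j. (\<forall>s<n. j s < N) \<and> (\<forall>x<N. \<exists>h\<in>H. \<exists>s<n. x = \<rho>' h (j s)) \<and>
    (\<forall>h\<in>H. \<forall>h'\<in>H. \<forall>s<n. \<forall>s'<n. \<rho>' h (j s) = \<rho>' h' (j s') \<longleftrightarrow> (\<exists>k\<in>K. h' = h \<otimes> k \<and> s = \<rho> k s'))" using ind unfolding induced_hset_def .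
  then obtain j where J: "(\<forall>s<n. j s < N) \<and> (\<forall>x<N. \<exists>h\<in>H. \<exists>s<n. x = \<rho>' h (j s)) \<and>
    (\<forall>h\<in>H. \<forall>h'\<in>H. \<forall>s<n. \<forall>s'<n. \<rho>' h (j s) = \<rho>' h' (j s') \<longleftrightarrow> (\<exists>k\<in>K. h' = h \<otimes> k \<and> s = \<rho> k s'))" ..
  note jlt = conjunct1[OF J] and sur = conjunct1[OF conjunct2[OF J]] and iff1 = conjunct2[OF conjunct2[OF J]]
  have D1: "\<rho>' k (j s) = j (\<rho> k s)" if k: "k \<in> K" and s: "s < n" for k s
  proof -
    have ks: "\<rho> k s < n" using fhset_lt[OF fhK k s] .
    have kc: "k \<in> carrier G" using Hc KH' k by blast
    have "\<exists>k'\<in>K. \<one> = k \<otimes> k' \<and> s = \<rho> k' (\<rho> k s)"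
      using Kinv[OF k] kc fhset_inv_apply[OF fhK k s] by (intro bexI[of _ "inv k"]) auto
    then have "\<rho>' k (j s) = \<rho>' \<one> (j (\<rho> k s))" using iff1 KH' k oneH s ks by blast
    then show ?thesis using fhset_one[OF fh'] by simp
  qed
  have D2: "\<tau> k (j0 0) = j0 0" if k: "k \<in> K" for k
  proof -
    have kc: "k \<in> carrier G" using Hc KH' k by blast
    have "\<exists>k'\<in>K. \<one> = k \<otimes> k'" using Kinv[OF k] kc by (intro bexI[of _ "inv k"]) auto
    then have "\<tau> k (j0 0) = \<tau> \<one> (j0 0)" using iff0[OF KH'[OF k] oneH] by blast
    then show ?thesis using fhset_one[OF fhH] by simp
  qed
  define hs where "hs = (\<lambda>a. SOME h. h \<in> H \<and> a = \<tau> h (j0 0))"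
  have hs: "hs a \<in> H \<and> \<tau> (hs a) (j0 0) = a" if a: "a < m" for a
  proof -
    have "\<exists>h. h \<in> H \<and> a = \<tau> h (j0 0)" using sur0[OF a] by blast
    then have "hs a \<in> H \<and> a = \<tau> (hs a) (j0 0)" unfolding hs_def by (rule someI_ex)
    then show ?thesis by simp
  qed
  define \<psi> where "\<psi> = (\<lambda>a s. \<rho>' (hs a) (j s))"
  define \<Phi> where "\<Phi> = (\<lambda>a. tree_relabel (\<psi> a) (tree_gact act (hs a) tK))"
  define T where "T = subst u \<Phi>"
  have lT: "leaves T = concat (map (\<lambda>a. map (\<psi> a) (leaves tK)) (leaves u))"
    by (simp add: T_def \<Phi>_def leaves_subst leaves_relabel)
  have Lu: "set (leaves u) = {..<m}" and LK: "set (leaves tK) = {..<n}"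
    using wfu wfK by (auto simp: fo_wf_def)
  have wfT: "fo_wf S N T"
    unfolding fo_wf_def
  proof (intro conjI)
    show "labels_ok S T" unfolding T_def
    proof (rule labels_ok_subst)
      show "labels_ok S u" using wfu by (simp add: fo_wf_def)
      show "\<forall>i\<in>set (leaves u). labels_ok S (\<Phi> i)"
        using Lu hs Hc loK labels_ok_gact by (auto simp: \<Phi>_def)
    qed
    show "distinct (leaves T)" unfolding lT
    proof (rule distinct_concat_map)
      show "distinct (leaves u)" using wfu by (simp add: fo_wf_def)
      show "\<forall>a\<in>set (leaves u). distinct (map (\<psi> a) (leaves tK))"
      proof
        fix a assume "a \<in> set (leaves u)"
        then have a: "a < m" using Lu by auto
        have ha: "hs a \<in> H" using hs[OF a] by simp
        have "inj_on (\<psi> a) {..<n}"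
        proof (rule inj_onI)
          fix s s' assume ss: "s \<in> {..<n}" "s' \<in> {..<n}" "\<psi> a s = \<psi> a s'"
          then obtain k where k: "k \<in> K" "hs a = hs a \<otimes> k" "s = \<rho> k s'"
            using iff1 ha unfolding \<psi>_def by auto
          have "k = \<one>"
          proof -
            have "inv (hs a) \<otimes> (hs a \<otimes> k) = k" using inv_cancel1 Hc ha KH' k(1) by blast
            then show ?thesis using k(2) Hc[OF ha] by (metis l_inv)
          qed
          then show "s = s'" using k(3) fhset_one[OF fhK] by simp
        qed
        then show "distinct (map (\<psi> a) (leaves tK))" using wfK LK by (simp add: fo_wf_def distinct_map)
      qed
      show "\<forall>a\<in>set (leaves u). \<forall>b\<in>set (leaves u). a \<noteq> b \<longrightarrow>
          set (map (\<psi> a) (leaves tK)) \<inter> set (map (\<psi> b) (leaves tK)) = {}"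
      proof (intro ballI impI)
        fix a b assume ab: "a \<in> set (leaves u)" "b \<in> set (leaves u)" "a \<noteq> b"
        have a: "a < m" and b: "b < m" using ab Lu by auto
        have ha: "hs a \<in> H" "\<tau> (hs a) (j0 0) = a" using hs[OF a] by auto
        have hb: "hs b \<in> H" "\<tau> (hs b) (j0 0) = b" using hs[OF b] by auto
        have False if "z \<in> set (map (\<psi> a) (leaves tK))" "z \<in> set (map (\<psi> b) (leaves tK))" for z
        proof -
          from that obtain s s' where s: "s < n" "s' < n" "z = \<psi> a s" "z = \<psi> b s'" using LK by auto
          then obtain k where k: "k \<in> K" "hs b = hs a \<otimes> k"
            using iff1 ha(1) hb(1) unfolding \<psi>_def by metis
          have "b = \<tau> (hs a \<otimes> k) (j0 0)" using hb(2) k(2) by simp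
          also have "\<dots> = \<tau> (hs a) (\<tau> k (j0 0))" using fhset_hom[OF fhH ha(1) KH'[OF k(1)]] by simp
          also have "\<dots> = a" using D2[OF k(1)] ha(2) by simp
          finally show False using ab(3) by simp
        qed
        then show "set (map (\<psi> a) (leaves tK)) \<inter> set (map (\<psi> b) (leaves tK)) = {}" by blast
      qed
    qed
    show "set (leaves T) = {..<N}"
    proof
      show "set (leaves T) \<subseteq> {..<N}"
      proof
        fix x assume "x \<in> set (leaves T)"
        then obtain a s where as: "a \<in> set (leaves u)" "s \<in> set (leaves tK)" "x = \<psi> a s" unfolding lT by auto
        have a: "a < m" and s: "s < n" using as Lu LK by auto
        show "x \<in> {..<N}" using fhset_lt[OF fh' conjunct1[OF hs[OF a]]] jlt s as(3) unfolding \<psi>_def by simp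
      qed
      show "{..<N} \<subseteq> set (leaves T)"
      proof
        fix x assume "x \<in> {..<N}"
        then obtain h s where hs0: "h \<in> H" "s < n" "x = \<rho>' h (j s)" using sur by auto
        define a where "a = \<tau> h (j0 0)"
        have a: "a < m" unfolding a_def using fhset_lt[OF fhH hs0(1) j0] .
        have ha: "hs a \<in> H" "\<tau> (hs a) (j0 0) = a" using hs[OF a] by auto
        then obtain k where k: "k \<in> K" "h = hs a \<otimes> k" using iff0[OF ha(1) hs0(1)] a_def by auto
        have "x = \<rho>' (hs a) (\<rho>' k (j s))" using hs0(3) k(2) fhset_hom[OF fh' ha(1) KH'[OF k(1)]] by simp
        also have "\<dots> = \<psi> a (\<rho> k s)" unfolding \<psi>_def using D1[OF k(1) hs0(2)] by simp
        finally have "x = \<psi> a (\<rho> k s)" .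
        moreover have "\<rho> k s \<in> set (leaves tK)" using fhset_lt[OF fhK k(1) hs0(2)] LK by simp
        moreover have "a \<in> set (leaves u)" using a Lu by simp
        ultimately show "x \<in> set (leaves T)" unfolding lT by auto
      qed
    qed
  qed
  have "fixd H \<rho>' T" unfolding fixd_def
  proof
    fix h assume h: "h \<in> H"
    have hc: "h \<in> carrier G" using Hc[OF h] .
    have c: "\<forall>a\<in>set (leaves (tree_gact act h u)).
       iso ((tree_relabel (\<rho>' h) \<circ> (tree_gact act h \<circ> \<Phi>)) a) ((\<Phi> \<circ> \<tau> h) a)"
    proof
      fix a assume "a \<in> set (leaves (tree_gact act h u))"
      then have a: "a < m" using Lu by simp
      define b where "b = \<tau> h a"
      have b: "b < m" unfolding b_def using fhset_lt[OF fhH h a] .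
      have ha: "hs a \<in> H" "\<tau> (hs a) (j0 0) = a" using hs[OF a] by auto
      have hb: "hs b \<in> H" "\<tau> (hs b) (j0 0) = b" using hs[OF b] by auto
      have hha: "h \<otimes> hs a \<in> H" using subgroup.m_closed[OF Hs h ha(1)] .
      have "\<tau> (h \<otimes> hs a) (j0 0) = b" using fhset_hom[OF fhH h ha(1)] ha(2) b_def by simp
      then obtain k where k: "k \<in> K" "h \<otimes> hs a = hs b \<otimes> k"
        using iff0[OF hb(1) hha] hb(2) by auto
      have kH: "k \<in> H" using KH'[OF k(1)] .
      have kc: "k \<in> carrier G" using Hc[OF kH] .
      have "(tree_relabel (\<rho>' h) \<circ> (tree_gact act h \<circ> \<Phi>)) a
          = tree_relabel (\<rho>' h \<circ> \<psi> a) (tree_gact act h (tree_gact act (hs a) tK))"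
        by (simp add: \<Phi>_def gact_relabel relabel_relabel)
      also have "\<dots> = tree_relabel (\<rho>' h \<circ> \<psi> a) (tree_gact act (hs b) (tree_gact act k tK))"
        using gact_gact[OF hc Hc[OF ha(1)] loK] gact_gact[OF Hc[OF hb(1)] kc loK] k(2) by simp
      also have "\<dots> = tree_relabel (\<psi> b \<circ> \<rho> k) (tree_gact act (hs b) (tree_gact act k tK))"
      proof (rule relabel_cong, rule ballI)
        fix s assume "s \<in> set (leaves (tree_gact act (hs b) (tree_gact act k tK)))"
        then have s: "s < n" using LK by simp
        have "(\<rho>' h \<circ> \<psi> a) s = \<rho>' (h \<otimes> hs a) (j s)"
          unfolding \<psi>_def using fhset_hom[OF fh' h ha(1)] by simp
        also have "\<dots> = \<rho>' (hs b) (\<rho>' k (j s))" using k(2) fhset_hom[OF fh' hb(1) kH] by simp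
        also have "\<dots> = (\<psi> b \<circ> \<rho> k) s" unfolding \<psi>_def using D1[OF k(1) s] by simp
        finally show "(\<rho>' h \<circ> \<psi> a) s = (\<psi> b \<circ> \<rho> k) s" .
      qed
      also have "\<dots> = tree_relabel (\<psi> b) (tree_gact act (hs b) (tree_act act k (\<rho> k) tK))"
        by (simp add: tree_act_def gact_relabel relabel_relabel)
      finally have e: "(tree_relabel (\<rho>' h) \<circ> (tree_gact act h \<circ> \<Phi>)) a = tree_relabel (\<psi> b) (tree_gact act (hs b) (tree_act act k (\<rho> k) tK))" .
      have "iso (tree_relabel (\<psi> b) (tree_gact act (hs b) (tree_act act k (\<rho> k) tK))) (\<Phi> b)"
        unfolding \<Phi>_def using fxK k(1) iso_relabel iso_gact[OF _ Hc[OF hb(1)]] unfolding fixd_def by blast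
      then show "iso ((tree_relabel (\<rho>' h) \<circ> (tree_gact act h \<circ> \<Phi>)) a) ((\<Phi> \<circ> \<tau> h) a)"
        using e b_def by simp
    qed
    have "tree_act act h (\<rho>' h) T = subst (tree_gact act h u) (tree_relabel (\<rho>' h) \<circ> (tree_gact act h \<circ> \<Phi>))"
      by (simp add: T_def tree_act_def gact_subst relabel_subst)
    moreover have "iso \<dots> (subst (tree_gact act h u) (\<Phi> \<circ> \<tau> h))" using iso_subst2 c by blast
    moreover have "subst (tree_gact act h u) (\<Phi> \<circ> \<tau> h) = subst (tree_act act h (\<tau> h) u) \<Phi>"
      by (simp add: tree_act_def subst_relabel)
    moreover have "iso (subst (tree_act act h (\<tau> h) u) \<Phi>) T"
      unfolding T_def using iso_subst1 fxu h unfolding fixd_def by auto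
    ultimately show "iso (tree_act act h (\<rho>' h) T) T" using iso_trans by metis
  qed
  then show ?thesis using adm_fo_iff fh' wfT by blast
qed

lemma adm_indexing: "indexing_system G (adm_fo G S act)"
  unfolding indexing_system_def
proof (intro conjI)
  show "\<forall>(H, n, \<rho>)\<in>adm_fo G S act. fhset G H n \<rho>" by (auto simp: adm_fo_def)
  show "\<forall>H n. subgroup H G \<longrightarrow> (H, n, \<lambda>h. id) \<in> adm_fo G S act" using adm_trivial by blast
  show "\<forall>H n \<rho> \<rho>' f. (H, n, \<rho>) \<in> adm_fo G S act \<longrightarrow> fhset G H n \<rho>' \<longrightarrow> bij_betw f {..<n} {..<n} \<longrightarrow>
        (\<forall>h\<in>H. \<forall>i<n. f (\<rho>' h i) = \<rho> h (f i)) \<longrightarrow> (H, n, \<rho>') \<in> adm_fo G S act"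
    using adm_iso by blast
  show "\<forall>H n m \<rho> \<rho>' f. (H, n, \<rho>) \<in> adm_fo G S act \<longrightarrow> fhset G H m \<rho>' \<longrightarrow> inj_on f {..<m} \<longrightarrow>
        f ` {..<m} \<subseteq> {..<n} \<longrightarrow>
        (\<forall>h\<in>H. \<forall>i<m. f (\<rho>' h i) = \<rho> h (f i)) \<longrightarrow> (H, m, \<rho>') \<in> adm_fo G S act"
    using adm_sub by blast
  show "\<forall>H n \<rho> K. (H, n, \<rho>) \<in> adm_fo G S act \<longrightarrow> subgroup K G \<longrightarrow> K \<subseteq> H \<longrightarrow>
        (K, n, \<lambda>h. if h \<in> K then \<rho> h else id) \<in> adm_fo G S act"
    using adm_restrict by blast
  show "\<forall>H n \<rho> g. (H, n, \<rho>) \<in> adm_fo G S act \<longrightarrow> g \<in> carrier G \<longrightarrow>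
        ((\<lambda>h. g \<otimes>\<^bsub>G\<^esub> h \<otimes>\<^bsub>G\<^esub> inv\<^bsub>G\<^esub> g) ` H, n,
         \<lambda>h. if h \<in> (\<lambda>h. g \<otimes>\<^bsub>G\<^esub> h \<otimes>\<^bsub>G\<^esub> inv\<^bsub>G\<^esub> g) ` H
             then \<rho> (inv\<^bsub>G\<^esub> g \<otimes>\<^bsub>G\<^esub> h \<otimes>\<^bsub>G\<^esub> g) else id) \<in> adm_fo G S act"
    using adm_conj by blast
  show "\<forall>H n \<rho> m \<rho>'. (H, n, \<rho>) \<in> adm_fo G S act \<longrightarrow> (H, m, \<rho>') \<in> adm_fo G S act \<longrightarrow>
        (H, n + m, \<lambda>h. if h \<in> H then (\<lambda>i. if i < n then \<rho> h i
                                     else if i < n + m then n + \<rho>' h (i - n) else i)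
                      else id) \<in> adm_fo G S act"
    using adm_coprod by blast
  show "\<forall>H n \<rho> m \<rho>'. (H, n, \<rho>) \<in> adm_fo G S act \<longrightarrow> (H, m, \<rho>') \<in> adm_fo G S act \<longrightarrow>
        (H, n * m, \<lambda>h. if h \<in> H then (\<lambda>i. if i < n * m
                                          then \<rho> h (i div m) * m + \<rho>' h (i mod m) else i)
                      else id) \<in> adm_fo G S act"
    using adm_prod by blast
  show "\<forall>H K n \<rho> N \<rho>'. subgroup H G \<longrightarrow> subgroup K G \<longrightarrow> K \<subseteq> H \<longrightarrow> (K, n, \<rho>) \<in> adm_fo G S act \<longrightarrow>
        (\<exists>m \<tau>. (H, m, \<tau>) \<in> adm_fo G S act \<and> induced_hset G H K 1 (\<lambda>h. id) m \<tau>) \<longrightarrow>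
        fhset G H N \<rho>' \<longrightarrow> induced_hset G H K n \<rho> N \<rho>' \<longrightarrow> (H, N, \<rho>') \<in> adm_fo G S act"
    using adm_selfind by blast
qed

lemma gen_sub_adm: "gen_indexing_system G (adm_seq G S act) \<subseteq> adm_fo G S act"
  unfolding gen_indexing_system_def by (rule Inter_lower) (simp add: adm_indexing adm_seq_sub)

end

locale ix = fo_ctx +
  fixes I
  assumes isI: "indexing_system G I" and subI: "adm_seq G S act \<subseteq> I"
begin

lemma I_triv: assumes "subgroup H G" shows "(H, n, \<lambda>h. id) \<in> I"
proof -
  have "\<forall>H n. subgroup H G \<longrightarrow> (H, n, \<lambda>h. id) \<in> I"
    using isI unfolding indexing_system_def by (elim conjE) assumption
  then show ?thesis using assms by blast
qed

lemma I_iso: assumes "(H, n, \<rho>) \<in> I" "fhset G H n \<rho>'" "bij_betw f {..<n} {..<n}"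
   "\<forall>h\<in>H. \<forall>i<n. f (\<rho>' h i) = \<rho> h (f i)" shows "(H, n, \<rho>') \<in> I"
proof -
  have "\<forall>H n \<rho> \<rho>' f. (H, n, \<rho>) \<in> I \<longrightarrow> fhset G H n \<rho>' \<longrightarrow> bij_betw f {..<n} {..<n} \<longrightarrow>
        (\<forall>h\<in>H. \<forall>i<n. f (\<rho>' h i) = \<rho> h (f i)) \<longrightarrow> (H, n, \<rho>') \<in> I"
    using isI unfolding indexing_system_def by (elim conjE) assumption
  then show ?thesis using assms by blast
qed

lemma I_sub: assumes "(H, n, \<rho>) \<in> I" "fhset G H m \<rho>'" "inj_on f {..<m}" "f ` {..<m} \<subseteq> {..<n}"
   "\<forall>h\<in>H. \<forall>i<m. f (\<rho>' h i) = \<rho> h (f i)" shows "(H, m, \<rho>') \<in> I"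
proof -
  have "\<forall>H n m \<rho> \<rho>' f. (H, n, \<rho>) \<in> I \<longrightarrow> fhset G H m \<rho>' \<longrightarrow> inj_on f {..<m} \<longrightarrow>
        f ` {..<m} \<subseteq> {..<n} \<longrightarrow>
        (\<forall>h\<in>H. \<forall>i<m. f (\<rho>' h i) = \<rho> h (f i)) \<longrightarrow> (H, m, \<rho>') \<in> I"
    using isI unfolding indexing_system_def by (elim conjE) assumption
  then show ?thesis using assms by blast
qed

lemma I_coprod: assumes "(H, n, \<rho>) \<in> I" "(H, m, \<rho>') \<in> I"
  shows "(H, n + m, \<lambda>h. if h \<in> H then (\<lambda>i. if i < n then \<rho> h i
                                     else if i < n + m then n + \<rho>' h (i - n) else i)
                      else id) \<in> I"
proof -
  have "\<forall>H n \<rho> m \<rho>'. (H, n, \<rho>) \<in> I \<longrightarrow> (H, m, \<rho>') \<in> I \<longrightarrow>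
        (H, n + m, \<lambda>h. if h \<in> H then (\<lambda>i. if i < n then \<rho> h i
                                     else if i < n + m then n + \<rho>' h (i - n) else i)
                      else id) \<in> I"
    using isI unfolding indexing_system_def by (elim conjE) assumption
  then show ?thesis using assms by blast
qed

lemma I_selfind: assumes "subgroup H G" "subgroup K G" "K \<subseteq> H" "(K, n, \<rho>) \<in> I"
        "\<exists>m \<tau>. (H, m, \<tau>) \<in> I \<and> induced_hset G H K 1 (\<lambda>h. id) m \<tau>"
        "fhset G H N \<rho>'" "induced_hset G H K n \<rho> N \<rho>'" shows "(H, N, \<rho>') \<in> I"
proof -
  have "\<forall>H K n \<rho> N \<rho>'. subgroup H G \<longrightarrow> subgroup K G \<longrightarrow> K \<subseteq> H \<longrightarrow> (K, n, \<rho>) \<in> I \<longrightarrow>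
        (\<exists>m \<tau>. (H, m, \<tau>) \<in> I \<and> induced_hset G H K 1 (\<lambda>h. id) m \<tau>) \<longrightarrow>
        fhset G H N \<rho>' \<longrightarrow> induced_hset G H K n \<rho> N \<rho>' \<longrightarrow> (H, N, \<rho>') \<in> I"
    using isI unfolding indexing_system_def by (elim conjE) assumption
  then show ?thesis using assms by blast
qed

definition inI where
  "inI H L \<rho> \<longleftrightarrow> (\<forall>e. bij_betw e {..<card L} L \<longrightarrow> (H, card L, enc e (card L) H \<rho>) \<in> I)"

lemma enc_apply: "h \<in> H \<Longrightarrow> i < c \<Longrightarrow> enc e c H \<rho> h i = the_inv_into {..<c} e (\<rho> h (e i))"
  by (simp add: enc_def)

lemma bij_inv_facts:
  assumes e: "bij_betw e {..<c} L"
  shows "\<And>y. y \<in> L \<Longrightarrow> e (the_inv_into {..<c} e y) = y"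
    and "\<And>y. y \<in> L \<Longrightarrow> the_inv_into {..<c} e y < c"
    and "\<And>i. i < c \<Longrightarrow> the_inv_into {..<c} e (e i) = i"
    and "\<And>i. i < c \<Longrightarrow> e i \<in> L"
proof -
  have inj: "inj_on e {..<c}" and im: "e ` {..<c} = L" using e by (auto simp: bij_betw_def)
  show "\<And>y. y \<in> L \<Longrightarrow> e (the_inv_into {..<c} e y) = y" using f_the_inv_into_f[OF inj] im by auto
  show "\<And>y. y \<in> L \<Longrightarrow> the_inv_into {..<c} e y < c"
    using the_inv_into_into[OF inj] im by (metis lessThan_iff subset_refl)
  show "\<And>i. i < c \<Longrightarrow> the_inv_into {..<c} e (e i) = i" using the_inv_into_f_f[OF inj] by simp
  show "\<And>i. i < c \<Longrightarrow> e i \<in> L" using im by auto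
qed

lemma enc_change:
  assumes H: "subgroup H G" and a: "acts H L \<rho>" and e: "bij_betw e {..<c} L" and e': "bij_betw e' {..<c} L"
    and A: "(H, c, enc e c H \<rho>) \<in> I"
  shows "(H, c, enc e' c H \<rho>) \<in> I"
proof (rule I_iso[OF A fhset_enc[OF H e' a]])
  define f where "f = the_inv_into {..<c} e \<circ> e'"
  have ie: "bij_betw (the_inv_into {..<c} e) L {..<c}" using bij_betw_the_inv_into[OF e] .
  show "bij_betw f {..<c} {..<c}" unfolding f_def using bij_betw_trans[OF e' ie] .
  note E = bij_inv_facts[OF e] and E' = bij_inv_facts[OF e']
  show "\<forall>h\<in>H. \<forall>i<c. f (enc e' c H \<rho> h i) = enc e c H \<rho> h (f i)"
  proof (intro ballI allI impI)
    fix h i assume h: "h \<in> H" and i: "i < c"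
    have r: "\<rho> h (e' i) \<in> L" using acts_closed[OF a h E'(4)[OF i]] .
    have fi: "f i < c" unfolding f_def using E(2) E'(4)[OF i] by simp
    have "f (enc e' c H \<rho> h i) = the_inv_into {..<c} e (\<rho> h (e' i))"
      unfolding f_def using enc_apply[OF h i] E'(1)[OF r] by simp
    also have "\<dots> = enc e c H \<rho> h (f i)"
      unfolding enc_apply[OF h fi] unfolding f_def using E(1)[OF E'(4)[OF i]] by simp
    finally show "f (enc e' c H \<rho> h i) = enc e c H \<rho> h (f i)" .
  qed
qed

lemma inI_intro:
  assumes H: "subgroup H G" and a: "acts H L \<rho>" and e: "bij_betw e {..<card L} L"
    and A: "(H, card L, enc e (card L) H \<rho>) \<in> I"
  shows "inI H L \<rho>"
  unfolding inI_def using enc_change[OF H a e _ A] by blast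

lemma inI_empty: "subgroup H G \<Longrightarrow> inI H {} \<rho>"
proof -
  assume H: "subgroup H G"
  have "enc e 0 H \<rho> = (\<lambda>h. id)" for e by (auto simp: enc_def fun_eq_iff)
  then show ?thesis unfolding inI_def using I_triv[OF H] by simp
qed

lemma inI_single: "subgroup H G \<Longrightarrow> acts H {i} \<rho> \<Longrightarrow> inI H {i} \<rho>"
proof -
  assume H: "subgroup H G" and a: "acts H {i} \<rho>"
  have "enc e 1 H \<rho> = (\<lambda>h. id)" if e: "bij_betw e {..<1} {i}" for e
  proof (rule ext)+
    fix h i'
    show "enc e 1 H \<rho> h i' = id i'"
    proof (cases "h \<in> H \<and> i' < 1")
      case True
      then have "i' = 0" "h \<in> H" by auto
      have e0: "e 0 = i" using e by (auto simp: bij_betw_def)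
      have "\<rho> h i = i" using acts_closed[OF a \<open>h \<in> H\<close>] by simp
      then show ?thesis using \<open>i' = 0\<close> \<open>h \<in> H\<close> e0 bij_inv_facts(3)[OF e, of 0] by (simp add: enc_def)
    qed (auto simp: enc_def)
  qed
  then show ?thesis unfolding inI_def using I_triv[OF H] by simp
qed

lemma acts_subset: "acts H L \<rho> \<Longrightarrow> L' \<subseteq> L \<Longrightarrow> (\<forall>h\<in>H. \<forall>x\<in>L'. \<rho> h x \<in> L') \<Longrightarrow> acts H L' \<rho>"
  unfolding acts_def by blast

lemma inI_union:
  assumes H: "subgroup H G" and fA: "finite A" and fB: "finite B" and dj: "A \<inter> B = {}"
    and aA: "acts H A \<rho>" and aB: "acts H B \<rho>" and iA: "inI H A \<rho>" and iB: "inI H B \<rho>"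
  shows "inI H (A \<union> B) \<rho>"
proof -
  define a where "a = card A"
  define b where "b = card B"
  obtain eA where eA: "bij_betw eA {..<a} A" using ex_bij_betw_nat_finite[OF fA] unfolding a_def atLeast0LessThan by blast
  obtain eB where eB: "bij_betw eB {..<b} B" using ex_bij_betw_nat_finite[OF fB] unfolding b_def atLeast0LessThan by blast
  have cAB: "card (A \<union> B) = a + b" unfolding a_def b_def using card_Un_disjoint[OF fA fB dj] .
  define e where "e = (\<lambda>i. if i < a then eA i else eB (i - a))"
  note EA = bij_inv_facts[OF eA] and EB = bij_inv_facts[OF eB]
  have injA: "inj_on eA {..<a}" and injB: "inj_on eB {..<b}" using eA eB by (auto simp: bij_betw_def)
  have e: "bij_betw e {..<a + b} (A \<union> B)"
    unfolding bij_betw_def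
  proof
    show "inj_on e {..<a + b}"
    proof (rule inj_onI)
      fix i j assume ij: "i \<in> {..<a + b}" "j \<in> {..<a + b}" "e i = e j"
      show "i = j"
      proof (cases "i < a"; cases "j < a")
        assume "i < a" "j < a" then show ?thesis using ij injA by (simp add: e_def inj_on_def)
      next
        assume "i < a" "\<not> j < a"
        then have "eA i \<in> A" "eB (j - a) \<in> B" using EA(4) EB(4) ij by auto
        then show ?thesis using ij \<open>i < a\<close> \<open>\<not> j < a\<close> dj by (auto simp: e_def)
      next
        assume "\<not> i < a" "j < a"
        then have "eA j \<in> A" "eB (i - a) \<in> B" using EA(4) EB(4) ij by auto
        then show ?thesis using ij \<open>j < a\<close> \<open>\<not> i < a\<close> dj by (auto simp: e_def)
      next
        assume "\<not> i < a" "\<not> j < a"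
        then have "eB (i - a) = eB (j - a)" "i - a < b" "j - a < b" using ij by (auto simp: e_def)
        then have "i - a = j - a" using injB by (auto simp: inj_on_def)
        then show ?thesis using \<open>\<not> i < a\<close> \<open>\<not> j < a\<close> by simp
      qed
    qed
    show "e ` {..<a + b} = A \<union> B"
    proof
      show "e ` {..<a + b} \<subseteq> A \<union> B" using EA(4) EB(4) by (auto simp: e_def)
      show "A \<union> B \<subseteq> e ` {..<a + b}"
      proof
        fix y assume "y \<in> A \<union> B"
        then show "y \<in> e ` {..<a + b}"
        proof
          assume y: "y \<in> A"
          have "e (the_inv_into {..<a} eA y) = y" "the_inv_into {..<a} eA y < a + b"
            using EA(1)[OF y] EA(2)[OF y] by (auto simp: e_def)
          then show ?thesis by (metis image_eqI lessThan_iff)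
        next
          assume y: "y \<in> B"
          have "e (a + the_inv_into {..<b} eB y) = y" "a + the_inv_into {..<b} eB y < a + b"
            using EB(1)[OF y] EB(2)[OF y] by (auto simp: e_def)
          then show ?thesis by (metis image_eqI lessThan_iff)
        qed
      qed
    qed
  qed
  have injE: "inj_on e {..<a + b}" using e by (simp add: bij_betw_def)
  have aAB: "acts H (A \<union> B) \<rho>" using aA aB unfolding acts_def by blast
  have IA: "(H, a, enc eA a H \<rho>) \<in> I" using iA eA unfolding inI_def a_def by blast
  have IB: "(H, b, enc eB b H \<rho>) \<in> I" using iB eB unfolding inI_def b_def by blast
  have eq: "(\<lambda>h. if h \<in> H then (\<lambda>i. if i < a then enc eA a H \<rho> h i
                 else if i < a + b then a + enc eB b H \<rho> h (i - a) else i) else id) = enc e (a + b) H \<rho>"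
  proof (rule ext)+
    fix h i
    show "(if h \<in> H then (\<lambda>i. if i < a then enc eA a H \<rho> h i
                 else if i < a + b then a + enc eB b H \<rho> h (i - a) else i) else id) i = enc e (a + b) H \<rho> h i"
    proof (cases "h \<in> H")
      case h: True
      show ?thesis
      proof (cases "i < a")
        case True
        define r where "r = \<rho> h (eA i)"
        have r: "r \<in> A" unfolding r_def using acts_closed[OF aA h EA(4)[OF True]] .
        have "e (the_inv_into {..<a} eA r) = r" "the_inv_into {..<a} eA r < a" using EA(1,2)[OF r] by (auto simp: e_def)
        then have "the_inv_into {..<a + b} e r = the_inv_into {..<a} eA r"
          by (intro the_inv_into_f_eq[OF injE]) auto
        then show ?thesis using h True by (simp add: enc_def e_def r_def)
      next
        case False
        show ?thesis
        proof (cases "i < a + b")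
          case True
          then have ib: "i - a < b" using False by simp
          define r where "r = \<rho> h (eB (i - a))"
          have r: "r \<in> B" unfolding r_def using acts_closed[OF aB h EB(4)[OF ib]] .
          have "e (a + the_inv_into {..<b} eB r) = r" "a + the_inv_into {..<b} eB r < a + b"
            using EB(1,2)[OF r] by (auto simp: e_def)
          then have "the_inv_into {..<a + b} e r = a + the_inv_into {..<b} eB r"
            by (intro the_inv_into_f_eq[OF injE]) auto
          then show ?thesis using h True False ib by (simp add: enc_def e_def r_def)
        next
          case F2: False then show ?thesis using h False by (simp add: enc_def)
        qed
      qed
    qed (simp add: enc_def)
  qed
  have "(H, a + b, enc e (a + b) H \<rho>) \<in> I" using I_coprod[OF IA IB] unfolding eq .
  then show ?thesis using inI_intro[OF H aAB] e cAB by simp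
qed

end

context ix
begin

lemma inI_induced:
  assumes Hs: "subgroup H G" and Ks: "subgroup K G" and KH: "K \<subseteq> H"
    and fL: "finite L" and aL: "acts H L \<rho>" and LiL: "Li \<subseteq> L" and aK: "acts K Li \<rho>"
    and iK: "inI K Li \<rho>"
    and Q: "\<exists>m \<tau>. (H, m, \<tau>) \<in> I \<and> induced_hset G H K 1 (\<lambda>h. id) m \<tau>"
    and cov: "\<forall>x\<in>L. \<exists>h\<in>H. \<exists>y\<in>Li. x = \<rho> h y"
    and sep: "\<forall>h\<in>H. \<forall>h'\<in>H. \<forall>y\<in>Li. \<forall>y'\<in>Li. \<rho> h y = \<rho> h' y' \<longrightarrow> inv h \<otimes> h' \<in> K"
  shows "inI H L \<rho>"
  unfolding inI_def
proof (intro allI impI)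
  fix e assume e: "bij_betw e {..<card L} L"
  define N where "N = card L"
  define ni where "ni = card Li"
  have fLi: "finite Li" using finite_subset[OF LiL fL] .
  obtain ei where ei: "bij_betw ei {..<ni} Li"
    using ex_bij_betw_nat_finite[OF fLi] unfolding ni_def atLeast0LessThan by blast
  have IK: "(K, ni, enc ei ni K \<rho>) \<in> I" using iK ei unfolding inI_def ni_def by blast
  have e': "bij_betw e {..<N} L" using e unfolding N_def .
  note E = bij_inv_facts[OF e'] and Ei = bij_inv_facts[OF ei]
  have KH': "\<And>k. k \<in> K \<Longrightarrow> k \<in> H" using KH by blast
  have Hc: "\<And>h. h \<in> H \<Longrightarrow> h \<in> carrier G" using subgroup.mem_carrier[OF Hs] .
  have fh: "fhset G H N (enc e N H \<rho>)" using fhset_enc[OF Hs e' aL] .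
  define j where "j = (\<lambda>s. the_inv_into {..<N} e (ei s))"
  have eiL: "\<And>s. s < ni \<Longrightarrow> ei s \<in> L" using Ei(4) LiL by blast
  have jN: "\<And>s. s < ni \<Longrightarrow> j s < N" unfolding j_def using E(2) eiL by blast
  have key: "enc e N H \<rho> h (j s) = the_inv_into {..<N} e (\<rho> h (ei s))" if h: "h \<in> H" and s: "s < ni" for h s
  proof -
    have "enc e N H \<rho> h (j s) = the_inv_into {..<N} e (\<rho> h (e (j s)))" using enc_apply[OF h jN[OF s]] .
    also have "e (j s) = ei s" unfolding j_def using E(1)[OF eiL[OF s]] .
    finally show ?thesis .
  qed
  have key2: "\<And>k s. k \<in> K \<Longrightarrow> s < ni \<Longrightarrow> enc ei ni K \<rho> k s = the_inv_into {..<ni} ei (\<rho> k (ei s))"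
    by (rule enc_apply)
  have ind: "induced_hset G H K ni (enc ei ni K \<rho>) N (enc e N H \<rho>)"
    unfolding induced_hset_def
  proof (intro exI conjI)
    show "\<forall>t<ni. j t < N" using jN by blast
    show "\<forall>x<N. \<exists>h\<in>H. \<exists>t<ni. x = enc e N H \<rho> h (j t)"
    proof (intro allI impI)
      fix x assume x: "x < N"
      obtain h y where hy: "h \<in> H" "y \<in> Li" "e x = \<rho> h y" using cov E(4)[OF x] by blast
      define t where "t = the_inv_into {..<ni} ei y"
      have t: "t < ni" "ei t = y" unfolding t_def using Ei(1,2) hy(2) by auto
      have "enc e N H \<rho> h (j t) = x" using key[OF hy(1) t(1)] t(2) hy(3)[symmetric] E(3)[OF x] by simp
      then show "\<exists>h\<in>H. \<exists>t<ni. x = enc e N H \<rho> h (j t)" using hy(1) t(1) by metis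
    qed
    show "\<forall>h\<in>H. \<forall>h'\<in>H. \<forall>t<ni. \<forall>t'<ni. enc e N H \<rho> h (j t) = enc e N H \<rho> h' (j t') \<longleftrightarrow>
        (\<exists>k\<in>K. h' = h \<otimes> k \<and> t = enc ei ni K \<rho> k t')"
    proof (intro ballI allI impI)
      fix h h' t t' assume h: "h \<in> H" and h': "h' \<in> H" and t: "t < ni" and t': "t' < ni"
      have y: "ei t \<in> Li" and y': "ei t' \<in> Li" using Ei(4) t t' by auto
      have r: "\<rho> h (ei t) \<in> L" and r': "\<rho> h' (ei t') \<in> L" using acts_closed[OF aL] h h' eiL t t' by auto
      have "enc e N H \<rho> h (j t) = enc e N H \<rho> h' (j t') \<longleftrightarrow> \<rho> h (ei t) = \<rho> h' (ei t')"
      proof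
        assume "enc e N H \<rho> h (j t) = enc e N H \<rho> h' (j t')"
        then have "e (the_inv_into {..<N} e (\<rho> h (ei t))) = e (the_inv_into {..<N} e (\<rho> h' (ei t')))"
          using key h h' t t' by simp
        then show "\<rho> h (ei t) = \<rho> h' (ei t')" using E(1) r r' by simp
      qed (use key h h' t t' in simp)
      also have "\<dots> \<longleftrightarrow> (\<exists>k\<in>K. h' = h \<otimes> k \<and> t = enc ei ni K \<rho> k t')"
      proof
        assume eq: "\<rho> h (ei t) = \<rho> h' (ei t')"
        define k where "k = inv h \<otimes> h'"
        have k: "k \<in> K" unfolding k_def using sep h h' y y' eq by blast
        have hk: "h' = h \<otimes> k" unfolding k_def using inv_cancel2 Hc h h' by simp
        have hi: "inv h \<in> H" using subgroup.m_inv_closed[OF Hs h] .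
        have "\<rho> k (ei t') = \<rho> (inv h) (\<rho> h' (ei t'))" unfolding k_def using acts_hom[OF aL hi h' eiL[OF t']] .
        also have "\<dots> = ei t" using eq[symmetric] acts_inv(1)[OF aL Hs h eiL[OF t]] by simp
        finally have "enc ei ni K \<rho> k t' = t" using key2[OF k t'] Ei(3)[OF t] by simp
        then show "\<exists>k\<in>K. h' = h \<otimes> k \<and> t = enc ei ni K \<rho> k t'" using k hk by metis
      next
        assume "\<exists>k\<in>K. h' = h \<otimes> k \<and> t = enc ei ni K \<rho> k t'"
        then obtain k where k: "k \<in> K" "h' = h \<otimes> k" "t = enc ei ni K \<rho> k t'" by blast
        have rk: "\<rho> k (ei t') \<in> Li" using acts_closed[OF aK k(1) y'] .
        have et: "ei t = \<rho> k (ei t')" using k(3) key2[OF k(1) t'] Ei(1)[OF rk] by simp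
        show "\<rho> h (ei t) = \<rho> h' (ei t')" using et k(2) acts_hom[OF aL h KH'[OF k(1)] eiL[OF t']] by simp
      qed
      finally show "enc e N H \<rho> h (j t) = enc e N H \<rho> h' (j t') \<longleftrightarrow> (\<exists>k\<in>K. h' = h \<otimes> k \<and> t = enc ei ni K \<rho> k t')" .
    qed
  qed
  show "(H, card L, enc e (card L) H \<rho>) \<in> I"
    using I_selfind[OF Hs Ks KH IK Q fh ind] unfolding N_def .
qed

lemma orbit_quot:
  assumes fha: "fhset G H k \<alpha>" and Ia: "(H, k, \<alpha>) \<in> I" and i0: "i0 < k"
  shows "\<exists>m \<tau>. (H, m, \<tau>) \<in> I \<and> induced_hset G H {h \<in> H. \<alpha> h i0 = i0} 1 (\<lambda>h. id) m \<tau>"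
proof -
  have Hs: "subgroup H G" using fhset_sg[OF fha] .
  have Hc: "\<And>h. h \<in> H \<Longrightarrow> h \<in> carrier G" using subgroup.mem_carrier[OF Hs] .
  have aa: "acts H {..<k} \<alpha>" using fhset_acts[OF fha] .
  define Ob where "Ob = (\<lambda>h. \<alpha> h i0) ` H"
  have oneH: "\<one> \<in> H" using subgroup.one_closed[OF Hs] .
  have i0O: "i0 \<in> Ob" unfolding Ob_def using oneH fhset_one[OF fha] by (metis id_apply image_eqI)
  have Ok: "Ob \<subseteq> {..<k}" unfolding Ob_def using fhset_lt[OF fha _ i0] by auto
  have fO: "finite Ob" using finite_subset[OF Ok] by simp
  define m where "m = card Ob"
  obtain eO where eO: "bij_betw eO {..<m} Ob"
    using ex_bij_betw_nat_finite[OF fO] unfolding m_def atLeast0LessThan by blast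
  note EO = bij_inv_facts[OF eO]
  have aO: "acts H Ob \<alpha>"
  proof (rule acts_subset[OF aa Ok])
    show "\<forall>h\<in>H. \<forall>x\<in>Ob. \<alpha> h x \<in> Ob"
    proof (intro ballI)
      fix h x assume h: "h \<in> H" and "x \<in> Ob"
      then obtain h' where h': "h' \<in> H" "x = \<alpha> h' i0" unfolding Ob_def by auto
      have "\<alpha> h x = \<alpha> (h \<otimes> h') i0" using h' fhset_hom[OF fha h h'(1)] by simp
      then show "\<alpha> h x \<in> Ob" unfolding Ob_def using subgroup.m_closed[OF Hs h h'(1)] by blast
    qed
  qed
  define \<tau> where "\<tau> = enc eO m H \<alpha>"
  have fht: "fhset G H m \<tau>" unfolding \<tau>_def using fhset_enc[OF Hs eO aO] .
  have inj: "inj_on eO {..<m}" and im: "eO ` {..<m} = Ob" using eO by (auto simp: bij_betw_def)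
  have Itau: "(H, m, \<tau>) \<in> I"
  proof (rule I_sub[OF Ia fht inj])
    show "eO ` {..<m} \<subseteq> {..<k}" using im Ok by simp
    show "\<forall>h\<in>H. \<forall>i<m. eO (\<tau> h i) = \<alpha> h (eO i)"
    proof (intro ballI allI impI)
      fix h i assume h: "h \<in> H" and i: "i < m"
      have "\<alpha> h (eO i) \<in> Ob" using acts_closed[OF aO h EO(4)[OF i]] .
      then show "eO (\<tau> h i) = \<alpha> h (eO i)" unfolding \<tau>_def enc_apply[OF h i] using EO(1) by simp
    qed
  qed
  define j0 where "j0 = (\<lambda>t::nat. the_inv_into {..<m} eO i0)"
  have j0m: "j0 t < m" for t unfolding j0_def using EO(2)[OF i0O] .
  have tj: "\<tau> h (j0 t) = the_inv_into {..<m} eO (\<alpha> h i0)" if h: "h \<in> H" for h t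
    unfolding \<tau>_def using enc_apply[OF h j0m] EO(1)[OF i0O] unfolding j0_def by simp
  have ind: "induced_hset G H {h \<in> H. \<alpha> h i0 = i0} 1 (\<lambda>h. id) m \<tau>"
    unfolding induced_hset_def
  proof (intro exI[of _ j0] conjI)
    show "\<forall>t<1. j0 t < m" using j0m by blast
    show "\<forall>x<m. \<exists>h\<in>H. \<exists>t<1. x = \<tau> h (j0 t)"
    proof (intro allI impI)
      fix x assume x: "x < m"
      obtain h where h: "h \<in> H" "eO x = \<alpha> h i0" using EO(4)[OF x] unfolding Ob_def by auto
      have "\<tau> h (j0 0) = x" using tj[OF h(1)] h(2)[symmetric] EO(3)[OF x] by simp
      then show "\<exists>h\<in>H. \<exists>t<1. x = \<tau> h (j0 t)" using h(1) by (metis less_one)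
    qed
    show "\<forall>h\<in>H. \<forall>h'\<in>H. \<forall>t<1. \<forall>t'<1. \<tau> h (j0 t) = \<tau> h' (j0 t') \<longleftrightarrow>
        (\<exists>k\<in>{h \<in> H. \<alpha> h i0 = i0}. h' = h \<otimes> k \<and> t = id t')"
    proof (intro ballI allI impI)
      fix h h' t t' assume h: "h \<in> H" and h': "h' \<in> H" and t: "(t::nat) < 1" and t': "(t'::nat) < 1"
      have tt: "t = id t'" using t t' by simp
      have r: "\<alpha> h i0 \<in> Ob" "\<alpha> h' i0 \<in> Ob" unfolding Ob_def using h h' by auto
      have "\<tau> h (j0 t) = \<tau> h' (j0 t') \<longleftrightarrow> \<alpha> h i0 = \<alpha> h' i0"
      proof
        assume "\<tau> h (j0 t) = \<tau> h' (j0 t')"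
        then have "eO (the_inv_into {..<m} eO (\<alpha> h i0)) = eO (the_inv_into {..<m} eO (\<alpha> h' i0))"
          using tj h h' by simp
        then show "\<alpha> h i0 = \<alpha> h' i0" using EO(1) r by simp
      qed (use tj h h' in simp)
      also have "\<dots> \<longleftrightarrow> (\<exists>k\<in>{h \<in> H. \<alpha> h i0 = i0}. h' = h \<otimes> k)"
      proof
        assume eq: "\<alpha> h i0 = \<alpha> h' i0"
        define k where "k = inv h \<otimes> h'"
        have hi: "inv h \<in> H" using subgroup.m_inv_closed[OF Hs h] .
        have kH: "k \<in> H" unfolding k_def using subgroup.m_closed[OF Hs hi h'] .
        have "\<alpha> k i0 = \<alpha> (inv h) (\<alpha> h' i0)" unfolding k_def using fhset_hom[OF fha hi h'] by simp
        also have "\<dots> = i0" using eq[symmetric] fhset_inv_apply[OF fha h i0] by simp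
        finally have "k \<in> {h \<in> H. \<alpha> h i0 = i0}" using kH by simp
        moreover have "h' = h \<otimes> k" unfolding k_def using inv_cancel2 Hc h h' by simp
        ultimately show "\<exists>k\<in>{h \<in> H. \<alpha> h i0 = i0}. h' = h \<otimes> k" by blast
      next
        assume "\<exists>k\<in>{h \<in> H. \<alpha> h i0 = i0}. h' = h \<otimes> k"
        then obtain k where k: "k \<in> H" "\<alpha> k i0 = i0" "h' = h \<otimes> k" by blast
        show "\<alpha> h i0 = \<alpha> h' i0" using k fhset_hom[OF fha h k(1)] by simp
      qed
      finally show "\<tau> h (j0 t) = \<tau> h' (j0 t') \<longleftrightarrow> (\<exists>k\<in>{h \<in> H. \<alpha> h i0 = i0}. h' = h \<otimes> k \<and> t = id t')"
        using tt by simp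
    qed
  qed
  show ?thesis using Itau ind by blast
qed

end

lemma distinct_concat_nth:
  "distinct (concat xs) \<Longrightarrow> i < length xs \<Longrightarrow> j < length xs \<Longrightarrow> i \<noteq> j \<Longrightarrow> set (xs ! i) \<inter> set (xs ! j) = {}"
proof (induction xs arbitrary: i j)
  case Nil then show ?case by simp
next
  case (Cons a xs)
  show ?case
  proof (cases i)
    case 0
    then obtain j' where j: "j = Suc j'" using Cons.prems(4) by (cases j) auto
    have m: "xs ! j' \<in> set xs" using Cons.prems(3) j by simp
    have "set (xs ! j') \<subseteq> set (concat xs)" using m by auto
    then show ?thesis using Cons.prems(1) 0 j by auto
  next
    case (Suc i')
    show ?thesis
    proof (cases j)
      case 0
      have m: "xs ! i' \<in> set xs" using Cons.prems(2) Suc by simp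
      have "set (xs ! i') \<subseteq> set (concat xs)" using m by auto
      then show ?thesis using Cons.prems(1) 0 Suc by auto
    next
      case (Suc j')
      then show ?thesis using Cons \<open>i = Suc i'\<close> by auto
    qed
  qed
qed

lemma distinct_concat_mem: "distinct (concat xs) \<Longrightarrow> ys \<in> set xs \<Longrightarrow> distinct ys"
  by (induction xs) auto

lemma tree_act_node: "tree_act act h \<sigma> (Node x ts) = Node (act (length ts) h id x) (map (tree_act act h \<sigma>) ts)"
  by (simp add: tree_act_def)

lemma leaves_tree_act: "set (leaves (tree_act act h \<sigma> t)) = \<sigma> ` set (leaves t)"
  by (simp add: tree_act_def leaves_relabel)

context fo_ctx
begin

lemma act_uniq:
  assumes x: "x \<in> S k" and hc: "h \<in> carrier G" and p: "\<sigma> permutes {..<k}" and p': "\<sigma>' permutes {..<k}"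
    and f: "act k h \<sigma> x = x" and f': "act k h \<sigma>' x = x"
  shows "\<sigma> = \<sigma>'"
proof -
  have ih: "inv h \<in> carrier G" using hc by simp
  have ps: "pinv \<sigma> permutes {..<k}" using permutes_inv[OF p] .
  have a1: "act k (inv h) (pinv \<sigma>) x = x"
  proof -
    have "act k (inv h) (pinv \<sigma>) x = act k (inv h) (pinv \<sigma>) (act k h \<sigma> x)" using f by simp
    also have "\<dots> = act k (inv h \<otimes> h) (pinv \<sigma> \<circ> \<sigma>) x" using act_comp[OF x ih hc ps p] by simp
    also have "\<dots> = x" using hc permutes_inv_o(2)[OF p] act_one[OF x] by simp
    finally show ?thesis .
  qed
  have "act k (inv h \<otimes> h) (pinv \<sigma> \<circ> \<sigma>') x = act k (inv h) (pinv \<sigma>) (act k h \<sigma>' x)"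
    using act_comp[OF x ih hc ps p'] .
  also have "\<dots> = x" using f' a1 by simp
  finally have "act k \<one> (pinv \<sigma> \<circ> \<sigma>') x = x" using hc by simp
  then have "pinv \<sigma> \<circ> \<sigma>' = id" using act_free[OF x permutes_compose[OF p' ps]] by simp
  then have "\<sigma> \<circ> (pinv \<sigma> \<circ> \<sigma>') = \<sigma>" by simp
  then show ?thesis using permutes_inv_o(1)[OF p] by (simp add: o_assoc)
qed

lemma acts_mono: "acts H L \<rho> \<Longrightarrow> K \<subseteq> H \<Longrightarrow> L' \<subseteq> L \<Longrightarrow> (\<forall>k\<in>K. \<forall>x\<in>L'. \<rho> k x \<in> L') \<Longrightarrow> acts K L' \<rho>"
  unfolding acts_def by blast

end

context ix
begin

lemma node_step:
  fixes x ts
  defines "k \<equiv> length ts" and "L \<equiv> \<lambda>i. set (leaves (ts ! i))"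
  assumes x: "x \<in> S k" and dj: "\<forall>i<k. \<forall>j<k. i \<noteq> j \<longrightarrow> L i \<inter> L j = {}"
    and Hs: "subgroup H G" and aH: "acts H (\<Union>i<k. L i) \<rho>"
    and fx: "\<forall>h\<in>H. iso (tree_act act h (\<rho> h) (Node x ts)) (Node x ts)"
    and IH: "\<forall>i<k. \<forall>K. subgroup K G \<longrightarrow> acts K (L i) \<rho> \<longrightarrow>
               (\<forall>h\<in>K. iso (tree_act act h (\<rho> h) (ts ! i)) (ts ! i)) \<longrightarrow> inI K (L i) \<rho>"
  shows "inI H (\<Union>i<k. L i) \<rho>"
proof -
  have Hc: "\<And>h. h \<in> H \<Longrightarrow> h \<in> carrier G" using subgroup.mem_carrier[OF Hs] .
  have ex: "\<exists>\<sigma>. \<sigma> permutes {..<k} \<and> act k h \<sigma> x = x \<and> (\<forall>i<k. iso (tree_act act h (\<rho> h) (ts ! i)) (ts ! (\<sigma> i)))"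
    if h: "h \<in> H" for h
  proof -
    have hc: "h \<in> carrier G" using Hc[OF h] .
    from fx h have "iso (Node (act k h id x) (map (tree_act act h (\<rho> h)) ts)) (Node x ts)"
      by (simp add: tree_act_node k_def)
    then obtain \<pi> where p: "\<pi> permutes {..<k}" and r: "rel k \<pi> (act k h id x) x"
      and sub: "\<forall>i<k. iso (map (tree_act act h (\<rho> h)) ts ! \<pi> i) (ts ! i)"
      by (cases rule: iso.cases) (auto simp: k_def)
    have e1: "act k h id x = act k \<one> \<pi> x" using r act_one[OF x] by (auto simp: rel_def)
    have pi: "pinv \<pi> permutes {..<k}" using permutes_inv[OF p] .
    have "act k h (pinv \<pi>) x = act k \<one> (pinv \<pi>) (act k h id x)" using act_split1[OF x hc pi] .
    also have "\<dots> = act k \<one> (pinv \<pi>) (act k \<one> \<pi> x)" using e1 by simp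
    also have "\<dots> = act k (\<one> \<otimes> \<one>) (pinv \<pi> \<circ> \<pi>) x" using act_comp[OF x one_closed one_closed pi p] by simp
    also have "\<dots> = x" using permutes_inv_o(2)[OF p] act_one[OF x] by simp
    finally have fxx: "act k h (pinv \<pi>) x = x" .
    have "\<forall>i<k. iso (tree_act act h (\<rho> h) (ts ! i)) (ts ! (pinv \<pi> i))"
    proof (intro allI impI)
      fix i assume i: "i < k"
      have i': "pinv \<pi> i < k" using permutes_in_image[OF pi] i by simp
      have pp: "\<pi> (pinv \<pi> i) = i" using permutes_inverses(1)[OF p] .
      have "iso (map (tree_act act h (\<rho> h)) ts ! \<pi> (pinv \<pi> i)) (ts ! (pinv \<pi> i))" using sub i' by blast
      then show "iso (tree_act act h (\<rho> h) (ts ! i)) (ts ! (pinv \<pi> i))" using pp i by (simp add: k_def)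
    qed
    then show ?thesis using pi fxx by blast
  qed
  define \<alpha> where "\<alpha> = (\<lambda>h. if h \<in> H then (THE \<sigma>. \<sigma> permutes {..<k} \<and> act k h \<sigma> x = x) else id)"
  have ap: "\<alpha> h permutes {..<k} \<and> act k h (\<alpha> h) x = x \<and> (\<forall>i<k. iso (tree_act act h (\<rho> h) (ts ! i)) (ts ! (\<alpha> h i)))"
    if h: "h \<in> H" for h
  proof -
    obtain \<sigma> where s: "\<sigma> permutes {..<k}" "act k h \<sigma> x = x" "\<forall>i<k. iso (tree_act act h (\<rho> h) (ts ! i)) (ts ! (\<sigma> i))"
      using ex[OF h] by blast
    have "(THE \<sigma>. \<sigma> permutes {..<k} \<and> act k h \<sigma> x = x) = \<sigma>"
      by (rule the_equality) (use s act_uniq[OF x Hc[OF h]] in blast)+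
    then have "\<alpha> h = \<sigma>" unfolding \<alpha>_def using h by simp
    then show ?thesis using s by simp
  qed
  have fha: "fhset G H k \<alpha>"
    unfolding fhset_def
  proof (intro conjI ballI allI impI)
    show "subgroup H G" by (rule Hs)
    fix h assume "h \<in> H" then show "\<alpha> h permutes {..<k}" using ap by blast
  next
    fix h h' assume h: "h \<in> H" and h': "h' \<in> H"
    have hh: "h \<otimes> h' \<in> H" using subgroup.m_closed[OF Hs h h'] .
    have "act k (h \<otimes> h') (\<alpha> h \<circ> \<alpha> h') x = act k h (\<alpha> h) (act k h' (\<alpha> h') x)"
      using act_comp[OF x Hc[OF h] Hc[OF h']] ap h h' by blast
    also have "\<dots> = x" using ap h h' by simp
    finally have "act k (h \<otimes> h') (\<alpha> h \<circ> \<alpha> h') x = x" .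
    then show "\<alpha> (h \<otimes> h') = \<alpha> h \<circ> \<alpha> h'"
      using act_uniq[OF x Hc[OF hh]] ap[OF hh] ap[OF h] ap[OF h'] permutes_compose by blast
  next
    fix h assume "h \<notin> H" then show "\<alpha> h = id" unfolding \<alpha>_def by simp
  qed
  have Ia: "(H, k, \<alpha>) \<in> I"
    using subI fha x ap unfolding adm_seq_def by blast
  have LL: "\<rho> h ` L i = L (\<alpha> h i)" if h: "h \<in> H" and i: "i < k" for h i
    using iso_leaves[of "tree_act act h (\<rho> h) (ts ! i)" "ts ! (\<alpha> h i)"] ap[OF h] i
    unfolding L_def leaves_tree_act by blast
  have alt: "\<alpha> h i < k" if "h \<in> H" "i < k" for h i using fhset_lt[OF fha] that .
  have aU: "acts H (\<Union>i\<in>J. L i) \<rho>" if J: "J \<subseteq> {..<k}" "\<forall>h\<in>H. \<forall>i\<in>J. \<alpha> h i \<in> J" for J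
  proof (rule acts_subset[OF aH])
    show "(\<Union>i\<in>J. L i) \<subseteq> (\<Union>i<k. L i)" using J by blast
    show "\<forall>h\<in>H. \<forall>y\<in>\<Union>i\<in>J. L i. \<rho> h y \<in> (\<Union>i\<in>J. L i)"
    proof (intro ballI)
      fix h y assume h: "h \<in> H" and "y \<in> (\<Union>i\<in>J. L i)"
      then obtain i where i: "i \<in> J" "y \<in> L i" by blast
      have "\<rho> h y \<in> L (\<alpha> h i)" using LL[OF h] i J by blast
      then show "\<rho> h y \<in> (\<Union>i\<in>J. L i)" using J h i by blast
    qed
  qed
  have fL: "finite (L i)" for i unfolding L_def by simp
  have oneH: "\<one> \<in> H" using subgroup.one_closed[OF Hs] .
  have a1: "\<alpha> \<one> = id" using fhset_one[OF fha] .
  have claim: "inI H (\<Union>i\<in>J. L i) \<rho>" if "J \<subseteq> {..<k}" "\<forall>h\<in>H. \<forall>i\<in>J. \<alpha> h i \<in> J" for J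
    using that
  proof (induction "card J" arbitrary: J rule: less_induct)
    case less
    show ?case
    proof (cases "J = {}")
      case True then show ?thesis using inI_empty[OF Hs] by simp
    next
      case False
      then obtain i0 where i0J: "i0 \<in> J" by blast
      have i0: "i0 < k" using i0J less.prems(1) by blast
      define Ob where "Ob = (\<lambda>h. \<alpha> h i0) ` H"
      define K where "K = {h \<in> H. \<alpha> h i0 = i0}"
      define J' where "J' = J - Ob"
      have ObJ: "Ob \<subseteq> J" unfolding Ob_def using less.prems(2) i0J by blast
      have i0Ob: "i0 \<in> Ob" unfolding Ob_def using oneH a1 by (metis id_apply image_eqI)
      have Obk: "Ob \<subseteq> {..<k}" using ObJ less.prems(1) by blast
      have Obinv: "\<forall>h\<in>H. \<forall>i\<in>Ob. \<alpha> h i \<in> Ob"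
      proof (intro ballI)
        fix h i assume h: "h \<in> H" and "i \<in> Ob"
        then obtain h' where h': "h' \<in> H" "i = \<alpha> h' i0" unfolding Ob_def by auto
        have "\<alpha> h i = \<alpha> (h \<otimes> h') i0" using h' fhset_hom[OF fha h h'(1)] by simp
        then show "\<alpha> h i \<in> Ob" unfolding Ob_def using subgroup.m_closed[OF Hs h h'(1)] by blast
      qed
      have J'k: "J' \<subseteq> {..<k}" using less.prems(1) unfolding J'_def by blast
      have J'inv: "\<forall>h\<in>H. \<forall>i\<in>J'. \<alpha> h i \<in> J'"
      proof (intro ballI)
        fix h i assume h: "h \<in> H" and i: "i \<in> J'"
        then have iJ: "i \<in> J" and iO: "i \<notin> Ob" and ik: "i < k" using J'k unfolding J'_def by auto
        have hi: "inv h \<in> H" using subgroup.m_inv_closed[OF Hs h] .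
        have "\<alpha> h i \<notin> Ob"
        proof
          assume "\<alpha> h i \<in> Ob"
          then have "\<alpha> (inv h) (\<alpha> h i) \<in> Ob" using Obinv hi by blast
          then show False using fhset_inv_apply[OF fha h ik] iO by simp
        qed
        then show "\<alpha> h i \<in> J'" unfolding J'_def using less.prems(2) h iJ by blast
      qed
      have fJ: "finite J" using finite_subset[OF less.prems(1)] by simp
      have cardlt: "card J' < card J" unfolding J'_def using fJ i0J i0Ob by (intro psubset_card_mono) auto
      have IHJ': "inI H (\<Union>i\<in>J'. L i) \<rho>" using less.hyps[OF cardlt J'k J'inv] .
      have KH: "K \<subseteq> H" unfolding K_def by blast
      have Ks: "subgroup K G"
      proof (rule subgroupI)
        show "K \<subseteq> carrier G" using KH Hc by blast
        show "K \<noteq> {}" unfolding K_def using oneH a1 by auto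
        show "inv a \<in> K" if "a \<in> K" for a
        proof -
          have a: "a \<in> H" "\<alpha> a i0 = i0" using that unfolding K_def by auto
          have "\<alpha> (inv a) i0 = \<alpha> (inv a) (\<alpha> a i0)" using a by simp
          also have "\<dots> = i0" using fhset_inv_apply[OF fha a(1) i0] .
          finally show ?thesis unfolding K_def using subgroup.m_inv_closed[OF Hs a(1)] by simp
        qed
        show "a \<otimes> b \<in> K" if "a \<in> K" "b \<in> K" for a b
        proof -
          have ab: "a \<in> H" "\<alpha> a i0 = i0" "b \<in> H" "\<alpha> b i0 = i0" using that unfolding K_def by auto
          have "\<alpha> (a \<otimes> b) i0 = i0" using ab fhset_hom[OF fha ab(1) ab(3)] by simp
          then show ?thesis unfolding K_def using subgroup.m_closed[OF Hs ab(1) ab(3)] by simp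
        qed
      qed
      have Li0U: "L i0 \<subseteq> (\<Union>i<k. L i)" using i0 by blast
      have aK: "acts K (L i0) \<rho>"
      proof (rule acts_mono[OF aH KH Li0U])
        show "\<forall>h\<in>K. \<forall>y\<in>L i0. \<rho> h y \<in> L i0"
        proof (intro ballI)
          fix h y assume h: "h \<in> K" and y: "y \<in> L i0"
          have "\<rho> h y \<in> L (\<alpha> h i0)" using LL[of h i0] h y i0 KH by blast
          then show "\<rho> h y \<in> L i0" using h unfolding K_def by simp
        qed
      qed
      have fK: "\<forall>h\<in>K. iso (tree_act act h (\<rho> h) (ts ! i0)) (ts ! i0)"
      proof
        fix h assume h: "h \<in> K"
        then have "h \<in> H" "\<alpha> h i0 = i0" unfolding K_def by auto
        then show "iso (tree_act act h (\<rho> h) (ts ! i0)) (ts ! i0)" using ap i0 by metis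
      qed
      have iK: "inI K (L i0) \<rho>" using IH i0 Ks aK fK by blast
      have Q: "\<exists>m \<tau>. (H, m, \<tau>) \<in> I \<and> induced_hset G H K 1 (\<lambda>h. id) m \<tau>"
        unfolding K_def using orbit_quot[OF fha Ia i0] .
      have aOb: "acts H (\<Union>i\<in>Ob. L i) \<rho>" using aU[OF Obk Obinv] .
      have fOb: "finite (\<Union>i\<in>Ob. L i)" using finite_subset[OF Obk] fL by blast
      have cov: "\<forall>y\<in>(\<Union>i\<in>Ob. L i). \<exists>h\<in>H. \<exists>y0\<in>L i0. y = \<rho> h y0"
      proof
        fix y assume "y \<in> (\<Union>i\<in>Ob. L i)"
        then obtain h where h: "h \<in> H" "y \<in> L (\<alpha> h i0)" unfolding Ob_def by blast
        then have "y \<in> \<rho> h ` L i0" using LL[OF h(1) i0] by simp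
        then show "\<exists>h\<in>H. \<exists>y0\<in>L i0. y = \<rho> h y0" using h(1) by blast
      qed
      have sep: "\<forall>h\<in>H. \<forall>h'\<in>H. \<forall>y\<in>L i0. \<forall>y'\<in>L i0. \<rho> h y = \<rho> h' y' \<longrightarrow> inv h \<otimes> h' \<in> K"
      proof (intro ballI impI)
        fix h h' y y' assume h: "h \<in> H" and h': "h' \<in> H" and y: "y \<in> L i0" and y': "y' \<in> L i0"
          and eq: "\<rho> h y = \<rho> h' y'"
        have m1: "\<rho> h y \<in> L (\<alpha> h i0)" using LL[OF h i0] y by blast
        have m2: "\<rho> h' y' \<in> L (\<alpha> h' i0)" using LL[OF h' i0] y' by blast
        have "\<alpha> h i0 = \<alpha> h' i0"
        proof (rule ccontr)
          assume ne: "\<alpha> h i0 \<noteq> \<alpha> h' i0"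
          have "L (\<alpha> h i0) \<inter> L (\<alpha> h' i0) = {}" using dj[rule_format, OF alt[OF h i0] alt[OF h' i0] ne] .
          then show False using m1 m2 eq by auto
        qed
        have hi: "inv h \<in> H" using subgroup.m_inv_closed[OF Hs h] .
        have "\<alpha> (inv h \<otimes> h') i0 = \<alpha> (inv h) (\<alpha> h' i0)" using fhset_hom[OF fha hi h'] by simp
        also have "\<dots> = i0" using \<open>\<alpha> h i0 = \<alpha> h' i0\<close>[symmetric] fhset_inv_apply[OF fha h i0] by simp
        finally show "inv h \<otimes> h' \<in> K" unfolding K_def using subgroup.m_closed[OF Hs hi h'] by simp
      qed
      have iOb: "inI H (\<Union>i\<in>Ob. L i) \<rho>"
        using inI_induced[OF Hs Ks KH fOb aOb _ aK iK Q cov sep] i0Ob by blast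
      have aJ': "acts H (\<Union>i\<in>J'. L i) \<rho>" using aU[OF J'k J'inv] .
      have fJ': "finite (\<Union>i\<in>J'. L i)" using finite_subset[OF J'k] fL by blast
      have djU: "(\<Union>i\<in>Ob. L i) \<inter> (\<Union>i\<in>J'. L i) = {}"
      proof -
        have "L i \<inter> L i' = {}" if "i \<in> Ob" "i' \<in> J'" for i i'
        proof -
          have "i \<noteq> i'" using that unfolding J'_def by blast
          moreover have "i < k" "i' < k" using that Obk J'k by auto
          ultimately show ?thesis using dj by blast
        qed
        then show ?thesis by blast
      qed
      have "inI H ((\<Union>i\<in>Ob. L i) \<union> (\<Union>i\<in>J'. L i)) \<rho>"
        using inI_union[OF Hs fOb fJ' djU aOb aJ' iOb IHJ'] .
      moreover have "(\<Union>i\<in>Ob. L i) \<union> (\<Union>i\<in>J'. L i) = (\<Union>i\<in>J. L i)"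
        using ObJ unfolding J'_def by blast
      ultimately show ?thesis by simp
    qed
  qed
  show ?thesis using claim[of "{..<k}"] alt by blast
qed

lemma tree_inI:
  "labels_ok S t \<Longrightarrow> distinct (leaves t) \<Longrightarrow> subgroup H G \<Longrightarrow> acts H (set (leaves t)) \<rho> \<Longrightarrow>
   (\<forall>h\<in>H. iso (tree_act act h (\<rho> h) t) t) \<Longrightarrow> inI H (set (leaves t)) \<rho>"
proof (induction t arbitrary: H)
  case (Leaf i)
  then show ?case using inI_single by simp
next
  case (Node x ts)
  define k where "k = length ts"
  define L where "L = (\<lambda>i. set (leaves (ts ! i)))"
  have sl: "set (leaves (Node x ts)) = (\<Union>i<k. L i)"
  proof -
    have "set ts = (\<lambda>i. ts ! i) ` {..<length ts}" by (auto simp: in_set_conv_nth)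
    then show ?thesis unfolding k_def L_def by simp
  qed
  have x: "x \<in> S k" using Node.prems(1) unfolding k_def by simp
  have dc: "distinct (concat (map leaves ts))" using Node.prems(2) by simp
  have dj: "\<forall>i<k. \<forall>j<k. i \<noteq> j \<longrightarrow> L i \<inter> L j = {}"
    using distinct_concat_nth[OF dc] unfolding k_def L_def by simp
  have IH: "\<forall>i<k. \<forall>K. subgroup K G \<longrightarrow> acts K (L i) \<rho> \<longrightarrow>
               (\<forall>h\<in>K. iso (tree_act act h (\<rho> h) (ts ! i)) (ts ! i)) \<longrightarrow> inI K (L i) \<rho>"
  proof (intro allI impI)
    fix i K assume i: "i < k" and K: "subgroup K G" "acts K (L i) \<rho>" "\<forall>h\<in>K. iso (tree_act act h (\<rho> h) (ts ! i)) (ts ! i)"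
    have mem: "ts ! i \<in> set ts" using i unfolding k_def by simp
    have lo: "labels_ok S (ts ! i)" using Node.prems(1) mem by simp
    have di: "distinct (leaves (ts ! i))" using distinct_concat_mem[OF dc] mem by simp
    show "inI K (L i) \<rho>" using Node.IH[OF mem lo di K(1)] K(2,3) unfolding L_def by blast
  qed
  have "inI H (\<Union>i<k. L i) \<rho>"
    using node_step[of x ts H \<rho>] x dj Node.prems(3,4,5) IH sl unfolding k_def L_def by simp
  then show ?case using sl by simp
qed

lemma adm_fo_sub_I: "adm_fo G S act \<subseteq> I"
proof
  fix T assume T: "T \<in> adm_fo G S act"
  obtain H n \<rho> where Tp: "T = (H, n, \<rho>)" by (cases T) auto
  from T Tp obtain t where fh: "fhset G H n \<rho>" and wf: "fo_wf S n t" and fx: "fixd H \<rho> t"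
    using adm_fo_iff by blast
  have sl: "set (leaves t) = {..<n}" using wf by (simp add: fo_wf_def)
  have "inI H {..<n} \<rho>"
    using tree_inI[of t H \<rho>] wf fhset_sg[OF fh] fhset_acts[OF fh] fx sl unfolding fo_wf_def fixd_def by simp
  then have "(H, n, enc id n H \<rho>) \<in> I" unfolding inI_def by simp
  then show "T \<in> I" using enc_id[OF fh] Tp by simp
qed

end

context fo_ctx
begin

lemma adm_sub_gen: "adm_fo G S act \<subseteq> gen_indexing_system G (adm_seq G S act)"
  unfolding gen_indexing_system_def
proof (rule Inter_greatest)
  fix I assume "I \<in> {I. indexing_system G I \<and> adm_seq G S act \<subseteq> I}"
  then have "indexing_system G I" "adm_seq G S act \<subseteq> I" by auto
  then interpret ix G S act I by unfold_locales
  show "adm_fo G S act \<subseteq> I" by (rule adm_fo_sub_I)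
qed

end

theorem theorem4p6:
  fixes G :: "('g, 'b) monoid_scheme"
    and S :: "nat \<Rightarrow> 'x set"
    and act :: "nat \<Rightarrow> 'g \<Rightarrow> (nat \<Rightarrow> nat) \<Rightarrow> 'x \<Rightarrow> 'x"
  assumes "group G" and "finite (carrier G)"
    and "symseq G S act"
    and "levels_sigma_free G S act"
    and "level_has_G_fixed G S act 0"
    and "level_has_G_fixed G S act 2"
  shows "fo_sigma_free G S act \<and> (\<forall>n. fo_has_G_fixed G S act n) \<and>
         adm_fo G S act = gen_indexing_system G (adm_seq G S act)"
proof -
  interpret fo_ctx2 G S act
    using assms by (simp add: fo_ctx2_def fo_ctx_def fo_ctx2_axioms_def fo_ctx_axioms_def)
  show ?thesis using sigma_free has_fixed gen_sub_adm adm_sub_gen by blast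
qed

end
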